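(* Let $\Omega\subset\mathbb{R}^3$ be a domain and let $\Phi:\Omega_\zeta\to\mathbb{A}_n^m$ be continuous in $\Omega_\zeta$. If $\int_{\partial\Delta_\zeta}\Phi(\zeta)\,d\zeta=0$ for every triangle $\Delta_\zeta$ whose closure $\overline{\Delta_\zeta}$ is contained in $\Omega_\zeta$, then $\Phi$ is monogenic in $\Omega_\zeta$.
   Context: Fix natural numbers $m\le n$. $\mathbb{A}_n^m$ is a commutative associative algebra with unit over $\mathbb{C}$ with a basis $\{I_k\}_{k=1}^n$ satisfying: (1) for $r,s\in\{1,\dots,m\}$, $I_rI_s=0$ if $r\ne s$ and $I_rI_r=I_r$; (2) for $r,s\in\{m+1,\dots,n\}$, $I_rI_s=\sum_{k=\max\{r,s\}+1}^{n}\Upsilon^{s}_{r,k}I_k$ with constants $\Upsilon^s_{r,k}\in\mathbb{C}$; (3) for each $s\in\{m+1,\dots,n\}$ there is a unique $u_s\in\{1,\dots,m\}$ such that for $r\in\{1,\dots,m\}$, $I_rI_s=I_s$ if $r=u_s$ and $0$ otherwise. Unit $1=\sum_{u=1}^mI_u$. $f_u(\sum_k\lambda_kI_k)=\lambda_u$, $u=1,\dots,m$. Let $e_1=1$, $e_2=\sum_ka_kI_k$, $e_3=\sum_kb_kI_k$ be linearly independent over $\mathbb{R}$; $\zeta=xe_1+ye_2+ze_3$, $E_3$ the real span of $e_1,e_2,e_3$, $Q_\zeta=\{xe_1+ye_2+ze_3:(x,y,z)\in Q\}$ for $Q\subset\mathbb{R}^3$ (a triangle $\Delta_\zeta$ means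 $\Delta_\zeta$ for a planar triangle $\Delta\subset\mathbb{R}^3$, and $\partial\Delta_\zeta$ its boundary curve). Standing assumption: $f_u(E_3)=\mathbb{C}$ for all $u$. A continuous $\Phi:\Omega_\zeta\to\mathbb{A}_n^m$ is monogenic if for every $\zeta\in\Omega_\zeta$ there is $\Phi'(\zeta)\in\mathbb{A}_n^m$ with $\lim_{\varepsilon\to0+}(\Phi(\zeta+\varepsilon h)-\Phi(\zeta))\varepsilon^{-1}=h\Phi'(\zeta)$ for all $h\in E_3$. Integral: for a Jordan rectifiable curve $\gamma$ and continuous $\Psi=\sum_k(U_k+iV_k)I_k$ on $\gamma_\zeta$ ($U_k,V_k$ real), $\int_{\gamma_\zeta}\Psi d\zeta:=\sum_kI_k\int_\gamma(U_k+iV_k)dx+\sum_ke_2I_k\int_\gamma(U_k+iV_k)dy+\sum_ke_3I_k\int_\gamma(U_k+iV_k)dz$. *)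

theory Defs
  imports "HOL-Analysis.Analysis"
begin

text \<open>Elements of the algebra A_n^m are represented by their coordinate functions
  k \<mapsto> lambda_k w.r.t. the basis I_1..I_n; coordinates outside 1..n are zero.
  The topology is the product topology on nat => complex (componentwise convergence,
  which on the finite-dimensional algebra is the usual one).\<close>

type_synonym alg = "nat \<Rightarrow> complex"

definition carrier_A :: "nat \<Rightarrow> alg set" where
  "carrier_A n = {a. \<forall>k. k \<notin> {1..n} \<longrightarrow> a k = 0}"

text \<open>Structure constants: I_r I_s = sum_k sc r s k I_k.  Ups r s k stands for
  Upsilon^s_{r,k}; u s stands for u_s.\<close>
definition sc :: "nat \<Rightarrow> nat \<Rightarrow> (nat \<Rightarrow> nat \<Rightarrow> nat \<Rightarrow> complex) \<Rightarrow> (nat \<Rightarrow> nat)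
                  \<Rightarrow> nat \<Rightarrow> nat \<Rightarrow> nat \<Rightarrow> complex" where
  "sc n m Ups u r s k =
     (if r \<le> m \<and> s \<le> m then (if r = s \<and> k = r then 1 else 0)
      else if m < r \<and> m < s then (if max r s < k \<and> k \<le> n then Ups r s k else 0)
      else if r \<le> m then (if r = u s \<and> k = s then 1 else 0)
      else (if s = u r \<and> k = r then 1 else 0))"

definition amul :: "nat \<Rightarrow> nat \<Rightarrow> (nat \<Rightarrow> nat \<Rightarrow> nat \<Rightarrow> complex) \<Rightarrow> (nat \<Rightarrow> nat)
                    \<Rightarrow> alg \<Rightarrow> alg \<Rightarrow> alg" where
  "amul n m Ups u x y = (\<lambda>k. \<Sum>r\<in>{1..n}. \<Sum>s\<in>{1..n}. x r * y s * sc n m Ups u r s k)"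

definition is_Anm :: "nat \<Rightarrow> nat \<Rightarrow> (nat \<Rightarrow> nat \<Rightarrow> nat \<Rightarrow> complex) \<Rightarrow> (nat \<Rightarrow> nat) \<Rightarrow> bool" where
  "is_Anm n m Ups u \<longleftrightarrow> 1 \<le> m \<and> m \<le> n \<and>
     (\<forall>s\<in>{m+1..n}. u s \<in> {1..m}) \<and>
     (\<forall>x\<in>carrier_A n. \<forall>y\<in>carrier_A n. amul n m Ups u x y = amul n m Ups u y x) \<and>
     (\<forall>x\<in>carrier_A n. \<forall>y\<in>carrier_A n. \<forall>z\<in>carrier_A n.
        amul n m Ups u (amul n m Ups u x y) z = amul n m Ups u x (amul n m Ups u y z))"

definition unitA :: "nat \<Rightarrow> alg" where
  "unitA m = (\<lambda>k. if k \<in> {1..m} then 1 else 0)"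

text \<open>zeta = x e_1 + y e_2 + z e_3 with e_1 = 1, e_2 = a, e_3 = b.\<close>
definition zmap :: "nat \<Rightarrow> alg \<Rightarrow> alg \<Rightarrow> real \<times> real \<times> real \<Rightarrow> alg" where
  "zmap m a b p = (\<lambda>k. complex_of_real (fst p) * unitA m k + complex_of_real (fst (snd p)) * a k
                       + complex_of_real (snd (snd p)) * b k)"

definition monogenic :: "nat \<Rightarrow> nat \<Rightarrow> (nat \<Rightarrow> nat \<Rightarrow> nat \<Rightarrow> complex) \<Rightarrow> (nat \<Rightarrow> nat)
                         \<Rightarrow> alg \<Rightarrow> alg \<Rightarrow> (alg \<Rightarrow> alg) \<Rightarrow> alg set \<Rightarrow> bool" where
  "monogenic n m Ups u a b Phi D \<longleftrightarrow>
     (\<forall>\<zeta>\<in>D. \<exists>Phi'\<in>carrier_A n. \<forall>p. let h = zmap m a b p in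
        ((\<lambda>\<epsilon>::real. (\<lambda>k. (Phi (\<lambda>j. \<zeta> j + complex_of_real \<epsilon> * h j) k - Phi \<zeta> k) / complex_of_real \<epsilon>))
          \<longlongrightarrow> amul n m Ups u h Phi') (at_right 0))"

text \<open>Integral of a complex function F along the oriented segment [P,Q] with respect
  to the coordinate c (dx, dy or dz).\<close>
definition edge_int :: "(real \<times> real \<times> real \<Rightarrow> complex) \<Rightarrow> real \<times> real \<times> real \<Rightarrow> real \<times> real \<times> real
                        \<Rightarrow> (real \<times> real \<times> real \<Rightarrow> real) \<Rightarrow> complex" where
  "edge_int F P Q c = integral {0..1} (\<lambda>t. F (P + t *\<^sub>R (Q - P)) * complex_of_real (c (Q - P)))"

definition tri_int :: "(real \<times> real \<times> real \<Rightarrow> complex) \<Rightarrow> real \<times> real \<times> real \<Rightarrow> real \<times> real \<times> real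
                       \<Rightarrow> real \<times> real \<times> real \<Rightarrow> (real \<times> real \<times> real \<Rightarrow> real) \<Rightarrow> complex" where
  "tri_int F A B C c = edge_int F A B c + edge_int F B C c + edge_int F C A c"

definition bnd_integral :: "nat \<Rightarrow> nat \<Rightarrow> (nat \<Rightarrow> nat \<Rightarrow> nat \<Rightarrow> complex) \<Rightarrow> (nat \<Rightarrow> nat)
       \<Rightarrow> alg \<Rightarrow> alg \<Rightarrow> (alg \<Rightarrow> alg) \<Rightarrow> real \<times> real \<times> real \<Rightarrow> real \<times> real \<times> real
       \<Rightarrow> real \<times> real \<times> real \<Rightarrow> alg" where
  "bnd_integral n m Ups u a b Phi A B C =
     (let J = (\<lambda>c k. if k \<in> {1..n} then tri_int (\<lambda>p. Phi (zmap m a b p) k) A B C c else 0);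
          X = J fst; Y = J (\<lambda>v. fst (snd v)); Z = J (\<lambda>v. snd (snd v))
      in (\<lambda>k. X k + amul n m Ups u a Y k + amul n m Ups u b Z k))"

end

theory Submission
  imports Defs "HOL-Complex_Analysis.Complex_Analysis"
begin


type_synonym R3 = "real \<times> real \<times> real"

lemma sum_shift_deriv:
  fixes g :: "nat \<Rightarrow> complex"
  shows "(\<Sum>a<N. of_nat a * X^(a - 1) * g a) =
         (\<Sum>a<N. X^a * (if Suc a < N then of_nat (Suc a) * g (Suc a) else 0))"
proof (cases N)
  case 0 then show ?thesis by simp
next
  case (Suc M)
  have "(\<Sum>a<Suc M. of_nat a * X^(a - 1) * g a) = (\<Sum>a<M. of_nat (Suc a) * X^a * g (Suc a))"
    by (subst sum.lessThan_Suc_shift) simp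
  also have "\<dots> = (\<Sum>a<Suc M. X^a * (if Suc a < Suc M then of_nat (Suc a) * g (Suc a) else 0))"
    by (simp add: algebra_simps)
  finally show ?thesis using Suc by simp
qed

lemma holo_if_const[holomorphic_intros]:
  "(P \<Longrightarrow> f holomorphic_on S) \<Longrightarrow> (\<lambda>w. if P then f w else 0) holomorphic_on S"
  by (cases P) auto

lemma sum_lessThan_if:
  fixes g :: "nat \<Rightarrow> 'a::comm_monoid_add"
  assumes "N \<le> M" shows "(\<Sum>b<M. if b < N then g b else 0) = (\<Sum>b<N. g b)"
proof -
  have "{..<M} \<inter> {b. b < N} = {..<N}" using assms by auto
  then show ?thesis by (simp add: sum.If_cases)
qed

lemma one_plus_of_nat_ne[simp]: "1 + (of_nat k::complex) \<noteq> 0"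
  by (metis of_nat_Suc of_nat_eq_0_iff nat.distinct(1))

locale coord =
  fixes \<xi> :: "R3 \<Rightarrow> complex" and \<rho> :: "R3 \<Rightarrow> real" and p0 :: R3 and \<delta> :: real
    and x y \<kappa> :: R3
  assumes bl\<xi>: "bounded_linear \<xi>" and bl\<rho>: "bounded_linear \<rho>"
    and \<xi>x: "\<xi> x = 1" and \<xi>y: "\<xi> y = \<i>" and \<xi>\<kappa>: "\<xi> \<kappa> = 0"
    and \<rho>x: "\<rho> x = 0" and \<rho>y: "\<rho> y = 0" and \<rho>\<kappa>: "\<rho> \<kappa> = 1"
    and recon: "\<And>v. v = Re (\<xi> v) *\<^sub>R x + Im (\<xi> v) *\<^sub>R y + \<rho> v *\<^sub>R \<kappa>"
    and \<delta>pos: "\<delta> > 0"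
begin

definition W :: "R3 \<Rightarrow> complex" where "W p = \<xi> (p - p0)"
definition Rr :: "R3 \<Rightarrow> real" where "Rr p = \<rho> (p - p0)"
definition U :: "R3 set" where "U = {p. cmod (W p) < \<delta> \<and> \<bar>Rr p\<bar> < \<delta>}"
definition pt :: "complex \<Rightarrow> real \<Rightarrow> R3" where
  "pt w r = p0 + Re w *\<^sub>R x + Im w *\<^sub>R y + r *\<^sub>R \<kappa>"

definition ev :: "nat \<Rightarrow> (nat \<Rightarrow> nat \<Rightarrow> complex \<Rightarrow> complex) \<Rightarrow> R3 \<Rightarrow> complex" where
  "ev N c p = (\<Sum>a<N. \<Sum>b<N. cnj (W p)^a * complex_of_real (Rr p)^b * c a b (W p))"

definition hol :: "(nat \<Rightarrow> nat \<Rightarrow> complex \<Rightarrow> complex) \<Rightarrow> bool" where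
  "hol c \<longleftrightarrow> (\<forall>a b. c a b holomorphic_on ball 0 \<delta>)"

definition cls :: "(R3 \<Rightarrow> complex) \<Rightarrow> bool" where
  "cls f \<longleftrightarrow> (\<exists>N c. hol c \<and> (\<forall>p\<in>U. f p = ev N c p))"

definition dw :: "(nat \<Rightarrow> nat \<Rightarrow> complex \<Rightarrow> complex) \<Rightarrow> nat \<Rightarrow> nat \<Rightarrow> complex \<Rightarrow> complex" where
  "dw c a b w = deriv (c a b) w"
definition dwb :: "nat \<Rightarrow> (nat \<Rightarrow> nat \<Rightarrow> complex \<Rightarrow> complex) \<Rightarrow> nat \<Rightarrow> nat \<Rightarrow> complex \<Rightarrow> complex" where
  "dwb N c a b w = (if Suc a < N then of_nat (Suc a) * c (Suc a) b w else 0)"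
definition dr :: "nat \<Rightarrow> (nat \<Rightarrow> nat \<Rightarrow> complex \<Rightarrow> complex) \<Rightarrow> nat \<Rightarrow> nat \<Rightarrow> complex \<Rightarrow> complex" where
  "dr N c a b w = (if Suc b < N then of_nat (Suc b) * c a (Suc b) w else 0)"

lemma lin\<xi>: "\<xi> (u + v) = \<xi> u + \<xi> v" "\<xi> (u - v) = \<xi> u - \<xi> v" "\<xi> (r *\<^sub>R u) = r *\<^sub>R \<xi> u"
  using bl\<xi> by (auto simp: linear_add linear_diff linear_scale bounded_linear.linear)

lemma lin\<rho>: "\<rho> (u + v) = \<rho> u + \<rho> v" "\<rho> (u - v) = \<rho> u - \<rho> v" "\<rho> (r *\<^sub>R u) = r *\<^sub>R \<rho> u"
  using bl\<rho> by (auto simp: linear_add linear_diff linear_scale bounded_linear.linear)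

lemma W_pt[simp]: "W (pt w r) = w"
  by (simp add: W_def pt_def lin\<xi> \<xi>x \<xi>y \<xi>\<kappa> complex_eq_iff)

lemma Rr_pt[simp]: "Rr (pt w r) = r"
  by (simp add: Rr_def pt_def lin\<rho> \<rho>x \<rho>y \<rho>\<kappa>)

lemma pt_WR[simp]: "pt (W p) (Rr p) = p"
proof -
  have "p - p0 = Re (W p) *\<^sub>R x + Im (W p) *\<^sub>R y + Rr p *\<^sub>R \<kappa>"
    unfolding W_def Rr_def by (rule recon)
  then show ?thesis unfolding pt_def by (simp add: algebra_simps)
qed

lemma W_deriv[derivative_intros]: "(W has_derivative \<xi>) (at p within S)"
  unfolding W_def using bl\<xi>
  by (auto intro!: derivative_eq_intros simp: lin\<xi> bounded_linear_imp_has_derivative)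

lemma Rr_deriv[derivative_intros]: "(Rr has_derivative \<rho>) (at p within S)"
  unfolding Rr_def using bl\<rho>
  by (auto intro!: derivative_eq_intros simp: lin\<rho> bounded_linear_imp_has_derivative)

lemma cont_W: "continuous_on S W"
  using W_deriv by (meson has_derivative_continuous continuous_at_imp_continuous_on)
lemma cont_Rr: "continuous_on S Rr"
  using Rr_deriv by (meson has_derivative_continuous continuous_at_imp_continuous_on)

lemma open_U: "open U"
proof -
  have "U = W -` ball 0 \<delta> \<inter> Rr -` {-\<delta><..<\<delta>}"
    by (auto simp: U_def abs_less_iff)
  moreover have "open (W -` ball 0 \<delta>)"
    using cont_W[of UNIV] by (simp add: open_vimage)
  moreover have "open (Rr -` {-\<delta><..<\<delta>})"
    using cont_Rr[of UNIV] by (simp add: open_vimage)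
  ultimately show ?thesis by auto
qed

lemma W_U: "p \<in> U \<Longrightarrow> W p \<in> ball 0 \<delta>"
  by (simp add: U_def)


lemma hol_holo: "hol c \<Longrightarrow> w \<in> ball 0 \<delta> \<Longrightarrow> (c a b has_field_derivative deriv (c a b) w) (at w)"
  unfolding hol_def
  by (meson holomorphic_derivI open_ball)

lemma term_deriv:
  assumes "hol c" "p \<in> U"
  shows "((\<lambda>p. cnj (W p)^a * complex_of_real (Rr p)^b * c a b (W p)) has_derivative
     (\<lambda>h. of_nat a * cnj (\<xi> h) * cnj (W p)^(a - 1) * complex_of_real (Rr p)^b * c a b (W p)
        + cnj (W p)^a * (of_nat b * complex_of_real (\<rho> h) * complex_of_real (Rr p)^(b - 1)) * c a b (W p)
        + cnj (W p)^a * complex_of_real (Rr p)^b * (deriv (c a b) (W p) * \<xi> h))) (at p)"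
proof -
  have c: "((\<lambda>p. c a b (W p)) has_derivative (\<lambda>h. deriv (c a b) (W p) * \<xi> h)) (at p)"
    using has_derivative_compose[OF W_deriv hol_holo[OF assms(1) W_U[OF assms(2)], unfolded has_field_derivative_def]]
    by (simp add: o_def)
  have cw: "((\<lambda>p. cnj (W p)) has_derivative (\<lambda>h. cnj (\<xi> h))) (at p)"
    using has_derivative_compose[OF W_deriv bounded_linear_imp_has_derivative[OF bounded_linear_cnj]]
    by (simp add: o_def)
  have rw: "((\<lambda>p. complex_of_real (Rr p)) has_derivative (\<lambda>h. complex_of_real (\<rho> h))) (at p)"
    by (auto intro!: derivative_eq_intros)
  show ?thesis
    by (rule derivative_eq_intros has_derivative_power cw rw c refl)+ (simp add: algebra_simps)
qed

lemma ev_deriv: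
  assumes "hol c" "p \<in> U"
  shows "(ev N c has_derivative (\<lambda>h. \<xi> h * ev N (dw c) p + cnj (\<xi> h) * ev N (dwb N c) p
            + complex_of_real (\<rho> h) * ev N (dr N c) p)) (at p)"
proof -
  have "(ev N c has_derivative (\<lambda>h. \<Sum>a<N. \<Sum>b<N.
       of_nat a * cnj (\<xi> h) * cnj (W p)^(a - 1) * complex_of_real (Rr p)^b * c a b (W p)
        + cnj (W p)^a * (of_nat b * complex_of_real (\<rho> h) * complex_of_real (Rr p)^(b - 1)) * c a b (W p)
        + cnj (W p)^a * complex_of_real (Rr p)^b * (deriv (c a b) (W p) * \<xi> h))) (at p)"
    unfolding ev_def[abs_def]
    by (intro has_derivative_sum term_deriv assms)
  moreover have "(\<lambda>h. \<Sum>a<N. \<Sum>b<N.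
       of_nat a * cnj (\<xi> h) * cnj (W p)^(a - 1) * complex_of_real (Rr p)^b * c a b (W p)
        + cnj (W p)^a * (of_nat b * complex_of_real (\<rho> h) * complex_of_real (Rr p)^(b - 1)) * c a b (W p)
        + cnj (W p)^a * complex_of_real (Rr p)^b * (deriv (c a b) (W p) * \<xi> h)) =
     (\<lambda>h. \<xi> h * ev N (dw c) p + cnj (\<xi> h) * ev N (dwb N c) p
            + complex_of_real (\<rho> h) * ev N (dr N c) p)"
  proof
    fix h
    let ?X = "cnj (W p)" and ?R = "complex_of_real (Rr p)"
    have 1: "(\<Sum>a<N. \<Sum>b<N. of_nat a * cnj (\<xi> h) * ?X^(a - 1) * ?R^b * c a b (W p))
        = cnj (\<xi> h) * ev N (dwb N c) p"
    proof -
      have "(\<Sum>a<N. \<Sum>b<N. of_nat a * cnj (\<xi> h) * ?X^(a - 1) * ?R^b * c a b (W p))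
          = cnj (\<xi> h) * (\<Sum>b<N. \<Sum>a<N. of_nat a * ?X^(a - 1) * (?R^b * c a b (W p)))"
        by (subst sum.swap) (simp add: sum_distrib_left algebra_simps)
      also have "\<dots> = cnj (\<xi> h) * (\<Sum>b<N. \<Sum>a<N. ?X^a * (if Suc a < N then of_nat (Suc a) * (?R^b * c (Suc a) b (W p)) else 0))"
        by (subst sum_shift_deriv) simp
      also have "\<dots> = cnj (\<xi> h) * ev N (dwb N c) p"
        unfolding ev_def dwb_def
        by (subst (2) sum.swap) (auto intro!: sum.cong simp: algebra_simps)
      finally show ?thesis .
    qed
    have 2: "(\<Sum>a<N. \<Sum>b<N. ?X^a * (of_nat b * complex_of_real (\<rho> h) * ?R^(b - 1)) * c a b (W p))
        = complex_of_real (\<rho> h) * ev N (dr N c) p"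
    proof -
      have "(\<Sum>a<N. \<Sum>b<N. ?X^a * (of_nat b * complex_of_real (\<rho> h) * ?R^(b - 1)) * c a b (W p))
          = complex_of_real (\<rho> h) * (\<Sum>a<N. \<Sum>b<N. of_nat b * ?R^(b - 1) * (?X^a * c a b (W p)))"
        by (simp add: sum_distrib_left algebra_simps)
      also have "\<dots> = complex_of_real (\<rho> h) * (\<Sum>a<N. \<Sum>b<N. ?R^b * (if Suc b < N then of_nat (Suc b) * (?X^a * c a (Suc b) (W p)) else 0))"
        by (subst sum_shift_deriv) simp
      also have "\<dots> = complex_of_real (\<rho> h) * ev N (dr N c) p"
        unfolding ev_def dr_def
        by (auto intro!: sum.cong simp: algebra_simps)
      finally show ?thesis .
    qed
    have 3: "(\<Sum>a<N. \<Sum>b<N. ?X^a * ?R^b * (deriv (c a b) (W p) * \<xi> h)) = \<xi> h * ev N (dw c) p"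
      unfolding ev_def dw_def by (simp add: sum_distrib_left algebra_simps)
    show "(\<Sum>a<N. \<Sum>b<N.
       of_nat a * cnj (\<xi> h) * ?X^(a - 1) * ?R^b * c a b (W p)
        + ?X^a * (of_nat b * complex_of_real (\<rho> h) * ?R^(b - 1)) * c a b (W p)
        + ?X^a * ?R^b * (deriv (c a b) (W p) * \<xi> h)) =
       \<xi> h * ev N (dw c) p + cnj (\<xi> h) * ev N (dwb N c) p + complex_of_real (\<rho> h) * ev N (dr N c) p"
      using 1 2 3 by (simp add: sum.distrib algebra_simps)
  qed
  ultimately show ?thesis by simp
qed

lemma hol_dw: "hol c \<Longrightarrow> hol (dw c)"
  unfolding hol_def dw_def[abs_def] by (auto intro: holomorphic_deriv)

lemma hol_dwb: "hol c \<Longrightarrow> hol (dwb N c)"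
  unfolding hol_def dwb_def[abs_def] by (auto intro!: holomorphic_intros)

lemma hol_dr: "hol c \<Longrightarrow> hol (dr N c)"
  unfolding hol_def dr_def[abs_def] by (auto intro!: holomorphic_intros)

lemma ev_add: "ev N (\<lambda>a b w. c1 a b w + c2 a b w) p = ev N c1 p + ev N c2 p"
  unfolding ev_def by (simp add: sum.distrib algebra_simps)

lemma ev_cmult: "ev N (\<lambda>a b w. k * c a b w) p = k * ev N c p"
  unfolding ev_def by (simp add: sum_distrib_left algebra_simps)

lemma ev_extend:
  assumes "N \<le> M"
  shows "ev M (\<lambda>a b w. if a < N \<and> b < N then c a b w else 0) p = ev N c p"
proof -
  have "ev M (\<lambda>a b w. if a < N \<and> b < N then c a b w else 0) p =
     (\<Sum>a<M. if a < N then (\<Sum>b<M. if b < N then cnj (W p)^a * complex_of_real (Rr p)^b * c a b (W p) else 0) else 0)"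
    unfolding ev_def
  proof (rule sum.cong[OF refl])
    fix a
    show "(\<Sum>b<M. cnj (W p)^a * complex_of_real (Rr p)^b * (if a < N \<and> b < N then c a b (W p) else 0)) =
      (if a < N then (\<Sum>b<M. if b < N then cnj (W p)^a * complex_of_real (Rr p)^b * c a b (W p) else 0) else 0)"
    proof (cases "a < N")
      case True
      have "(\<Sum>b<M. cnj (W p)^a * complex_of_real (Rr p)^b * (if a < N \<and> b < N then c a b (W p) else 0)) =
        (\<Sum>b<M. if b < N then cnj (W p)^a * complex_of_real (Rr p)^b * c a b (W p) else 0)"
        by (rule sum.cong) (simp_all add: True)
      then show ?thesis using True by simp
    qed simp
  qed
  also have "\<dots> = (\<Sum>a<N. (\<Sum>b<M. if b < N then cnj (W p)^a * complex_of_real (Rr p)^b * c a b (W p) else 0))"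
    using assms by (rule sum_lessThan_if)
  also have "\<dots> = ev N c p"
    unfolding ev_def using assms by (intro sum.cong refl sum_lessThan_if)
  finally show ?thesis .
qed

lemma hol_extend: "hol c \<Longrightarrow> hol (\<lambda>a b w. if a < N \<and> b < N then c a b w else 0)"
  unfolding hol_def by (auto intro!: holomorphic_intros)

lemma cls_cong:
  assumes "cls f" "\<And>p. p \<in> U \<Longrightarrow> f p = g p" shows "cls g"
proof -
  obtain N c where 1: "hol c" "\<forall>p\<in>U. f p = ev N c p" using assms(1) cls_def by auto
  show ?thesis unfolding cls_def
    by (intro exI[of _ N] exI[of _ c]) (use 1 assms(2) in auto)
qed

lemma cls_add:
  assumes "cls f" "cls g" shows "cls (\<lambda>p. f p + g p)"
proof -
  obtain N1 c1 where 1: "hol c1" "\<forall>p\<in>U. f p = ev N1 c1 p" using assms(1) cls_def by auto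
  obtain N2 c2 where 2: "hol c2" "\<forall>p\<in>U. g p = ev N2 c2 p" using assms(2) cls_def by auto
  let ?M = "max N1 N2"
  let ?c = "\<lambda>a b w. (if a < N1 \<and> b < N1 then c1 a b w else 0) + (if a < N2 \<and> b < N2 then c2 a b w else 0)"
  have "hol ?c" using 1 2 unfolding hol_def by (auto intro!: holomorphic_intros)
  moreover have "\<forall>p\<in>U. f p + g p = ev ?M ?c p"
    using 1 2 by (simp add: ev_add ev_extend)
  ultimately show ?thesis unfolding cls_def by blast
qed

lemma cls_cmult:
  assumes "cls f" shows "cls (\<lambda>p. k * f p)"
proof -
  obtain N c where 1: "hol c" "\<forall>p\<in>U. f p = ev N c p" using assms cls_def by auto
  have "hol (\<lambda>a b w. k * c a b w)" using 1 unfolding hol_def by (auto intro!: holomorphic_intros)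
  moreover have "\<forall>p\<in>U. k * f p = ev N (\<lambda>a b w. k * c a b w) p" using 1 by (simp add: ev_cmult)
  ultimately show ?thesis unfolding cls_def by blast
qed

lemma cls_holW:
  assumes "h holomorphic_on ball 0 \<delta>" shows "cls (\<lambda>p. h (W p))"
proof -
  have "hol (\<lambda>a b. h)" using assms unfolding hol_def by auto
  moreover have "\<forall>p\<in>U. h (W p) = ev 1 (\<lambda>a b. h) p" by (simp add: ev_def)
  ultimately show ?thesis unfolding cls_def by blast
qed

lemma cls_zero: "cls (\<lambda>p. 0)"
  using cls_holW[of "\<lambda>_. 0"] by simp

lemma cls_const: "cls (\<lambda>p. k)"
  using cls_holW[of "\<lambda>_. k"] by simp

lemma cls_minus: "cls f \<Longrightarrow> cls (\<lambda>p. - f p)"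
  using cls_cmult[of f "-1"] by simp

lemma cls_diff: "cls f \<Longrightarrow> cls g \<Longrightarrow> cls (\<lambda>p. f p - g p)"
  using cls_add[of f "\<lambda>p. - g p"] cls_minus by simp

lemma cls_sum: "finite S \<Longrightarrow> (\<And>i. i \<in> S \<Longrightarrow> cls (f i)) \<Longrightarrow> cls (\<lambda>p. \<Sum>i\<in>S. f i p)"
  by (induction S rule: finite_induct) (auto intro: cls_add cls_zero)

lemma cls_deriv:
  assumes "cls f"
  shows "\<exists>fw fwb fr. cls fw \<and> cls fwb \<and> cls fr \<and>
    (\<forall>p\<in>U. (f has_derivative (\<lambda>h. \<xi> h * fw p + cnj (\<xi> h) * fwb p + complex_of_real (\<rho> h) * fr p)) (at p))"
proof -
  obtain N c where 1: "hol c" "\<forall>p\<in>U. f p = ev N c p" using assms cls_def by auto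
  have "cls (ev N (dw c))" "cls (ev N (dwb N c))" "cls (ev N (dr N c))"
    unfolding cls_def using hol_dw hol_dwb hol_dr 1 by blast+
  moreover have "\<forall>p\<in>U. (f has_derivative (\<lambda>h. \<xi> h * ev N (dw c) p + cnj (\<xi> h) * ev N (dwb N c) p
            + complex_of_real (\<rho> h) * ev N (dr N c) p)) (at p)"
  proof
    fix p assume p: "p \<in> U"
    show "(f has_derivative (\<lambda>h. \<xi> h * ev N (dw c) p + cnj (\<xi> h) * ev N (dwb N c) p
            + complex_of_real (\<rho> h) * ev N (dr N c) p)) (at p)"
      by (rule has_derivative_transform_within_open[OF ev_deriv[OF 1(1) p] open_U p])
         (use 1 in auto)
  qed
  ultimately show ?thesis by blast
qed

lemma anti_wb:
  assumes "cls \<alpha>"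
  shows "\<exists>A Aw Ar. cls A \<and> cls Aw \<and> cls Ar \<and>
    (\<forall>p\<in>U. (A has_derivative (\<lambda>h. \<xi> h * Aw p + cnj (\<xi> h) * \<alpha> p + complex_of_real (\<rho> h) * Ar p)) (at p))"
proof -
  obtain N c where 1: "hol c" "\<forall>p\<in>U. \<alpha> p = ev N c p" using assms cls_def by auto
  define c' where "c' = (\<lambda>a b w. if 0 < a \<and> a \<le> N \<and> b < N then c (a - 1) b w / of_nat a else 0)"
  have h': "hol c'" using 1 unfolding hol_def c'_def by (auto intro!: holomorphic_intros)
  have eq: "dwb (Suc N) c' = (\<lambda>a b w. if a < N \<and> b < N then c a b w else 0)"
    unfolding dwb_def c'_def by (intro ext) auto
  have "\<forall>p\<in>U. ev (Suc N) (dwb (Suc N) c') p = \<alpha> p"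
    using 1 by (simp add: eq ev_extend)
  then have "\<forall>p\<in>U. (ev (Suc N) c' has_derivative (\<lambda>h. \<xi> h * ev (Suc N) (dw c') p + cnj (\<xi> h) * \<alpha> p
            + complex_of_real (\<rho> h) * ev (Suc N) (dr (Suc N) c') p)) (at p)"
    using ev_deriv[OF h', of _ "Suc N"] by simp
  moreover have "cls (ev (Suc N) c')" "cls (ev (Suc N) (dw c'))" "cls (ev (Suc N) (dr (Suc N) c'))"
    unfolding cls_def using h' hol_dw hol_dr by blast+
  ultimately show ?thesis by blast
qed

lemma anti_r:
  assumes "cls \<gamma>"
  shows "\<exists>B Bw Bwb. cls B \<and> cls Bw \<and> cls Bwb \<and>
    (\<forall>p\<in>U. (B has_derivative (\<lambda>h. \<xi> h * Bw p + cnj (\<xi> h) * Bwb p + complex_of_real (\<rho> h) * \<gamma> p)) (at p))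
    \<and> (\<forall>p\<in>U. Rr p = 0 \<longrightarrow> B p = 0)"
proof -
  obtain N c where 1: "hol c" "\<forall>p\<in>U. \<gamma> p = ev N c p" using assms cls_def by auto
  define c' where "c' = (\<lambda>a b w. if 0 < b \<and> b \<le> N \<and> a < N then c a (b - 1) w / of_nat b else 0)"
  have h': "hol c'" using 1 unfolding hol_def c'_def by (auto intro!: holomorphic_intros)
  have eq: "dr (Suc N) c' = (\<lambda>a b w. if a < N \<and> b < N then c a b w else 0)"
    unfolding dr_def c'_def by (intro ext) auto
  have "\<forall>p\<in>U. ev (Suc N) (dr (Suc N) c') p = \<gamma> p"
    using 1 by (simp add: eq ev_extend)
  then have "\<forall>p\<in>U. (ev (Suc N) c' has_derivative (\<lambda>h. \<xi> h * ev (Suc N) (dw c') p + cnj (\<xi> h) * ev (Suc N) (dwb (Suc N) c') p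
            + complex_of_real (\<rho> h) * \<gamma> p)) (at p)"
    using ev_deriv[OF h', of _ "Suc N"] by simp
  moreover have "cls (ev (Suc N) c')" "cls (ev (Suc N) (dw c'))" "cls (ev (Suc N) (dwb (Suc N) c'))"
    unfolding cls_def using h' hol_dw hol_dwb by blast+
  moreover have "\<forall>p\<in>U. Rr p = 0 \<longrightarrow> ev (Suc N) c' p = 0"
  proof (intro ballI impI)
    fix p assume r0: "Rr p = 0"
    have "\<And>a b. cnj (W p)^a * complex_of_real (Rr p)^b * c' a b (W p) = 0"
    proof -
      fix a b show "cnj (W p)^a * complex_of_real (Rr p)^b * c' a b (W p) = 0"
        by (cases b) (simp_all add: r0 c'_def)
    qed
    then show "ev (Suc N) c' p = 0" unfolding ev_def by (intro sum.neutral ballI) presburger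
  qed
  ultimately show ?thesis by blast
qed

lemma pt_deriv:
  "((\<lambda>w. pt w r) has_derivative (\<lambda>dz. Re dz *\<^sub>R x + Im dz *\<^sub>R y)) (at w)"
  unfolding pt_def
  by (auto intro!: derivative_eq_intros bounded_linear_imp_has_derivative bounded_linear_Re bounded_linear_Im)

lemma pt_deriv_r:
  "((\<lambda>t. pt w (t * r)) has_derivative (\<lambda>dt. (dt * r) *\<^sub>R \<kappa>)) (at t within S)"
  unfolding pt_def
  by (auto intro!: derivative_eq_intros simp: algebra_simps)

lemma \<xi>_pt_dir: "\<xi> (Re dz *\<^sub>R x + Im dz *\<^sub>R y) = dz"
  by (simp add: lin\<xi> \<xi>x \<xi>y complex_eq_iff)

lemma \<rho>_pt_dir: "\<rho> (Re dz *\<^sub>R x + Im dz *\<^sub>R y) = 0"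
  by (simp add: lin\<rho> \<rho>x \<rho>y)

lemma pt_U: "cmod w < \<delta> \<Longrightarrow> \<bar>r\<bar> < \<delta> \<Longrightarrow> pt w r \<in> U"
  by (simp add: U_def)

lemma step:
  assumes "cls \<alpha>" "cls \<beta>"
    and D: "\<And>p. p \<in> U \<Longrightarrow> (g has_derivative (\<lambda>h. \<xi> h * \<Psi> p + cnj (\<xi> h) * \<alpha> p + complex_of_real (\<rho> h) * \<beta> p)) (at p)"
  shows "cls g"
proof -
  obtain A Aw Ar where A: "cls A" "cls Aw" "cls Ar"
    "\<forall>p\<in>U. (A has_derivative (\<lambda>h. \<xi> h * Aw p + cnj (\<xi> h) * \<alpha> p + complex_of_real (\<rho> h) * Ar p)) (at p)"
    using anti_wb[OF assms(1)] by blast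
  define \<gamma> where "\<gamma> = (\<lambda>p. \<beta> p - Ar p)"
  have "cls \<gamma>" unfolding \<gamma>_def using assms(2) A(3) by (rule cls_diff)
  then obtain B Bw Bwb where B: "cls B" "cls Bw" "cls Bwb"
    "\<forall>p\<in>U. (B has_derivative (\<lambda>h. \<xi> h * Bw p + cnj (\<xi> h) * Bwb p + complex_of_real (\<rho> h) * \<gamma> p)) (at p)"
    "\<forall>p\<in>U. Rr p = 0 \<longrightarrow> B p = 0"
    using anti_r by blast
  define Q where "Q = (\<lambda>p. g p - A p)"
  have DQ: "(Q has_derivative (\<lambda>h. \<xi> h * (\<Psi> p - Aw p) + complex_of_real (\<rho> h) * \<gamma> p)) (at p)"
    if "p \<in> U" for p
  proof -
    have "(Q has_derivative (\<lambda>h. (\<xi> h * \<Psi> p + cnj (\<xi> h) * \<alpha> p + complex_of_real (\<rho> h) * \<beta> p)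
        - (\<xi> h * Aw p + cnj (\<xi> h) * \<alpha> p + complex_of_real (\<rho> h) * Ar p))) (at p)"
      unfolding Q_def using D[OF that] A(4) that by (intro has_derivative_diff) auto
    then show ?thesis by (simp add: \<gamma>_def algebra_simps)
  qed
  define \<Phi> where "\<Phi> = (\<lambda>p. Q p - B p)"
  have D\<Phi>: "(\<Phi> has_derivative (\<lambda>h. \<xi> h * (\<Psi> p - Aw p - Bw p) - cnj (\<xi> h) * Bwb p)) (at p)"
    if "p \<in> U" for p
  proof -
    have "(\<Phi> has_derivative (\<lambda>h. (\<xi> h * (\<Psi> p - Aw p) + complex_of_real (\<rho> h) * \<gamma> p)
        - (\<xi> h * Bw p + cnj (\<xi> h) * Bwb p + complex_of_real (\<rho> h) * \<gamma> p))) (at p)"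
      unfolding \<Phi>_def using DQ[OF that] B(4) that by (intro has_derivative_diff) auto
    then show ?thesis by (simp add: algebra_simps)
  qed
  define q0 where "q0 = (\<lambda>w. Q (pt w 0))"
  have hq0: "q0 holomorphic_on ball 0 \<delta>"
  proof -
    have "(q0 has_field_derivative (\<Psi> (pt w 0) - Aw (pt w 0))) (at w)" if "w \<in> ball 0 \<delta>" for w
    proof -
      have pU: "pt w 0 \<in> U" using that \<delta>pos by (intro pt_U) auto
      have "(q0 has_derivative (\<lambda>dz. \<xi> (Re dz *\<^sub>R x + Im dz *\<^sub>R y) * (\<Psi> (pt w 0) - Aw (pt w 0))
          + complex_of_real (\<rho> (Re dz *\<^sub>R x + Im dz *\<^sub>R y)) * \<gamma> (pt w 0))) (at w)"
        unfolding q0_def using has_derivative_compose[OF pt_deriv DQ[OF pU]] by (simp add: o_def)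
      then show ?thesis
        by (simp add: \<xi>_pt_dir \<rho>_pt_dir has_field_derivative_def mult.commute[of _ "\<Psi> (pt w 0) - Aw (pt w 0)"])
    qed
    then show ?thesis
      using holomorphic_on_open open_ball by blast
  qed
  have \<Phi>eq: "\<Phi> p = q0 (W p)" if "p \<in> U" for p
  proof -
    define \<phi> where "\<phi> = (\<lambda>t. \<Phi> (pt (W p) (t * Rr p)))"
    have inU: "pt (W p) (t * Rr p) \<in> U" if "t \<in> {0..1}" for t
    proof (rule pt_U)
      show "cmod (W p) < \<delta>" using \<open>p \<in> U\<close> by (simp add: U_def)
      have "\<bar>t * Rr p\<bar> \<le> \<bar>Rr p\<bar>" using that by (simp add: abs_mult mult_left_le_one_le)
      then show "\<bar>t * Rr p\<bar> < \<delta>" using \<open>p \<in> U\<close> by (simp add: U_def)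
    qed
    have "\<exists>c. \<forall>t\<in>{0..1}. \<phi> t = c"
    proof (rule has_derivative_zero_constant)
      fix t :: real assume t: "t \<in> {0..1}"
      have "(\<phi> has_derivative (\<lambda>dt. \<xi> ((dt * Rr p) *\<^sub>R \<kappa>) * (\<Psi> (pt (W p) (t * Rr p)) - Aw (pt (W p) (t * Rr p)) - Bw (pt (W p) (t * Rr p)))
          - cnj (\<xi> ((dt * Rr p) *\<^sub>R \<kappa>)) * Bwb (pt (W p) (t * Rr p)))) (at t within {0..1})"
        unfolding \<phi>_def using has_derivative_compose[OF pt_deriv_r has_derivative_at_withinI[OF D\<Phi>[OF inU[OF t]]]]
        by (simp add: o_def)
      then show "(\<phi> has_derivative (\<lambda>h. 0)) (at t within {0..1})"
        by (simp add: lin\<xi> \<xi>\<kappa>)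
    qed auto
    then have "\<phi> 1 = \<phi> 0" by force
    then have "\<Phi> p = \<Phi> (pt (W p) 0)" unfolding \<phi>_def by simp
    also have "\<dots> = q0 (W p)"
    proof -
      have "pt (W p) 0 \<in> U" using \<open>p \<in> U\<close> \<delta>pos by (intro pt_U) (auto simp: U_def)
      then have "B (pt (W p) 0) = 0" using B(5) by simp
      then show ?thesis unfolding \<Phi>_def q0_def by simp
    qed
    finally show ?thesis .
  qed
  have "cls (\<lambda>p. A p + B p + q0 (W p))"
    by (intro cls_add A B cls_holW hq0)
  then show "cls g"
  proof (rule cls_cong)
    fix p assume "p \<in> U"
    from \<Phi>eq[OF this] show "A p + B p + q0 (W p) = g p"
      unfolding \<Phi>_def Q_def by (simp add: algebra_simps)
  qed
qed

lemma ev_cong: "(\<And>a b. c a b (W p) = c' a b (W p)) \<Longrightarrow> ev N c p = ev N c' p"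
  unfolding ev_def by simp

lemma hol_analytic: "hol c \<Longrightarrow> w \<in> ball 0 \<delta> \<Longrightarrow> c a b analytic_on {w}"
  unfolding hol_def by (meson analytic_on_open analytic_on_subset empty_subsetI insert_subset open_ball)

lemma deriv_cm_U: "hol c \<Longrightarrow> p \<in> U \<Longrightarrow> deriv (\<lambda>w. k * c a b w) (W p) = k * deriv (c a b) (W p)"
  using deriv_cmult_at hol_analytic W_U by blast

lemma dwb_dw: "hol c \<Longrightarrow> p \<in> U \<Longrightarrow> ev N (dwb N (dw c)) p = ev N (dw (dwb N c)) p"
  by (rule ev_cong) (auto simp: dwb_def[abs_def] dw_def deriv_cm_U)

lemma dr_dw: "hol c \<Longrightarrow> p \<in> U \<Longrightarrow> ev N (dr N (dw c)) p = ev N (dw (dr N c)) p"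
  by (rule ev_cong) (auto simp: dr_def[abs_def] dw_def deriv_cm_U)

lemma dr_dwb: "ev N (dr N (dwb N c)) p = ev N (dwb N (dr N c)) p"
  by (rule ev_cong) (auto simp: dr_def dwb_def)

lemma cls_sym:
  assumes "cls G"
  shows "\<exists>G' G''. (\<forall>h. cls (G' h)) \<and> (\<forall>p\<in>U. (G has_derivative (\<lambda>h. G' h p)) (at p)) \<and>
     (\<forall>h p. p \<in> U \<longrightarrow> ((G' h) has_derivative (\<lambda>k. G'' h k p)) (at p)) \<and>
     (\<forall>h k p. p \<in> U \<longrightarrow> G'' h k p = G'' k h p)"
proof -
  obtain N c where 1: "hol c" "\<forall>p\<in>U. G p = ev N c p" using assms cls_def by auto
  define E1 where "E1 = ev N (dw c)"
  define E2 where "E2 = ev N (dwb N c)"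
  define E3 where "E3 = ev N (dr N c)"
  define G' where "G' = (\<lambda>h p. \<xi> h * E1 p + cnj (\<xi> h) * E2 p + complex_of_real (\<rho> h) * E3 p)"
  define G'' where "G'' = (\<lambda>h k p.
      \<xi> h * (\<xi> k * ev N (dw (dw c)) p + cnj (\<xi> k) * ev N (dwb N (dw c)) p + complex_of_real (\<rho> k) * ev N (dr N (dw c)) p)
    + cnj (\<xi> h) * (\<xi> k * ev N (dw (dwb N c)) p + cnj (\<xi> k) * ev N (dwb N (dwb N c)) p + complex_of_real (\<rho> k) * ev N (dr N (dwb N c)) p)
    + complex_of_real (\<rho> h) * (\<xi> k * ev N (dw (dr N c)) p + cnj (\<xi> k) * ev N (dwb N (dr N c)) p + complex_of_real (\<rho> k) * ev N (dr N (dr N c)) p))"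
  have h1: "hol (dw c)" "hol (dwb N c)" "hol (dr N c)" using 1 hol_dw hol_dwb hol_dr by auto
  have c1: "cls E1" "cls E2" "cls E3" unfolding E1_def E2_def E3_def cls_def using h1 by blast+
  have "cls (G' h)" for h unfolding G'_def by (intro cls_add cls_cmult c1)
  moreover have "\<forall>p\<in>U. (G has_derivative (\<lambda>h. G' h p)) (at p)"
  proof
    fix p assume p: "p \<in> U"
    show "(G has_derivative (\<lambda>h. G' h p)) (at p)"
      unfolding G'_def E1_def E2_def E3_def
      by (rule has_derivative_transform_within_open[OF ev_deriv[OF 1(1) p] open_U p])
         (use 1 in auto)
  qed
  moreover have "((G' h) has_derivative (\<lambda>k. G'' h k p)) (at p)" if p: "p \<in> U" for h p
  proof -
    have "((G' h) has_derivative (\<lambda>k.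
       \<xi> h * (\<xi> k * ev N (dw (dw c)) p + cnj (\<xi> k) * ev N (dwb N (dw c)) p + complex_of_real (\<rho> k) * ev N (dr N (dw c)) p)
     + cnj (\<xi> h) * (\<xi> k * ev N (dw (dwb N c)) p + cnj (\<xi> k) * ev N (dwb N (dwb N c)) p + complex_of_real (\<rho> k) * ev N (dr N (dwb N c)) p)
     + complex_of_real (\<rho> h) * (\<xi> k * ev N (dw (dr N c)) p + cnj (\<xi> k) * ev N (dwb N (dr N c)) p + complex_of_real (\<rho> k) * ev N (dr N (dr N c)) p))) (at p)"
      unfolding G'_def E1_def E2_def E3_def
      by (intro has_derivative_add has_derivative_mult_right ev_deriv h1 p)
    then show ?thesis unfolding G''_def .
  qed
  moreover have "G'' h k p = G'' k h p" if "p \<in> U" for h k p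
    unfolding G''_def using dwb_dw[OF 1(1) that] dr_dw[OF 1(1) that] dr_dwb[of N c p]
    by (simp add: algebra_simps)
  ultimately show ?thesis by blast
qed

end



definition Lz :: "nat \<Rightarrow> alg \<Rightarrow> alg \<Rightarrow> R3 \<Rightarrow> nat \<Rightarrow> complex" where
  "Lz m a b h r = zmap m a b h r"

definition mu :: "nat \<Rightarrow> nat \<Rightarrow> (nat \<Rightarrow> nat \<Rightarrow> nat \<Rightarrow> complex) \<Rightarrow> (nat \<Rightarrow> nat)
     \<Rightarrow> alg \<Rightarrow> alg \<Rightarrow> nat \<Rightarrow> nat \<Rightarrow> R3 \<Rightarrow> complex" where
  "mu n m Ups u a b k s h = (\<Sum>r\<in>{1..n}. zmap m a b h r * sc n m Ups u r s k)"

definition blk :: "nat \<Rightarrow> (nat \<Rightarrow> nat) \<Rightarrow> nat \<Rightarrow> nat" where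
  "blk m u k = (if k \<le> m then k else u k)"

lemma amul_mu: "amul n m Ups u (zmap m a b h) X k = (\<Sum>s\<in>{1..n}. mu n m Ups u a b k s h * X s)"
  unfolding amul_def mu_def
  by (subst sum.swap) (simp add: sum_distrib_right sum_distrib_left algebra_simps)

lemma zmap_lin: "zmap m a b (p + q) r = zmap m a b p r + zmap m a b q r"
  "zmap m a b (c *\<^sub>R p) r = of_real c * zmap m a b p r"
  "zmap m a b (p - q) r = zmap m a b p r - zmap m a b q r"
  "zmap m a b (- p) r = - zmap m a b p r"
  "zmap m a b 0 r = 0"
  by (auto simp: zmap_def algebra_simps)

lemma linear_zmap: "linear (\<lambda>h. zmap m a b h r)"
  by (rule linearI) (simp_all add: zmap_lin scaleR_conv_of_real)

lemma bl_zmap: "bounded_linear (\<lambda>h. zmap m a b h r)"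
  using linear_zmap linear_conv_bounded_linear by blast

lemma bl_mu: "bounded_linear (mu n m Ups u a b k s)"
  unfolding mu_def[abs_def]
  by (intro bounded_linear_sum bounded_linear_mult_const bl_zmap)

lemma mu_lin: "mu n m Ups u a b k s (p + q) = mu n m Ups u a b k s p + mu n m Ups u a b k s q"
   "mu n m Ups u a b k s (p - q) = mu n m Ups u a b k s p - mu n m Ups u a b k s q"
   "mu n m Ups u a b k s (- q) = - mu n m Ups u a b k s q"
   "mu n m Ups u a b k s (c *\<^sub>R q) = of_real c * mu n m Ups u a b k s q"
   "mu n m Ups u a b k s 0 = 0"
  unfolding mu_def by (auto simp: zmap_lin sum.distrib sum_subtractf sum_distrib_left sum_negf algebra_simps)

lemma amul_out: "k \<notin> {1..n} \<Longrightarrow> amul n m Ups u x y k = 0"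
  unfolding amul_def sc_def by (auto intro!: sum.neutral)

lemma unit_sc:
  assumes "is_Anm n m Ups u" "s \<in> {1..n}" "k \<in> {1..n}"
  shows "(\<Sum>r\<in>{1..n}. unitA m r * sc n m Ups u r s k) = (if s = k then 1 else 0)"
proof -
  have mn: "m \<le> n" and us: "s > m \<Longrightarrow> u s \<in> {1..m}"
    using assms unfolding is_Anm_def by auto
  have "(\<Sum>r\<in>{1..n}. unitA m r * sc n m Ups u r s k) = (\<Sum>r\<in>{1..n}. if r = (if s \<le> m then s else u s) \<and> s = k then 1 else 0)"
    using assms(2,3) us mn by (intro sum.cong refl) (auto simp: unitA_def sc_def)
  also have "\<dots> = (if s = k then 1 else 0)"
    using assms(2,3) us mn by (auto simp: sum.delta)
  finally show ?thesis .
qed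

lemma mu_e1:
  assumes "is_Anm n m Ups u" "s \<in> {1..n}" "k \<in> {1..n}"
  shows "mu n m Ups u a b k s (1, 0, 0) = (if s = k then 1 else 0)"
  using unit_sc[OF assms] unfolding mu_def zmap_def by simp

lemma sc_11: "r \<le> m \<Longrightarrow> s \<le> m \<Longrightarrow> sc n m Ups u r s k = (if r = s \<and> k = r then 1 else 0)"
  by (simp add: sc_def)
lemma sc_22: "m < r \<Longrightarrow> m < s \<Longrightarrow> sc n m Ups u r s k = (if max r s < k \<and> k \<le> n then Ups r s k else 0)"
  by (simp add: sc_def)
lemma sc_12: "r \<le> m \<Longrightarrow> m < s \<Longrightarrow> sc n m Ups u r s k = (if r = u s \<and> k = s then 1 else 0)"
  by (simp add: sc_def)
lemma sc_21: "m < r \<Longrightarrow> s \<le> m \<Longrightarrow> sc n m Ups u r s k = (if s = u r \<and> k = r then 1 else 0)"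
  by (simp add: sc_def)

definition bv :: "nat \<Rightarrow> alg" where "bv j = (\<lambda>i. if i = j then 1 else 0)"

lemma bv_carrier: "j \<in> {1..n} \<Longrightarrow> bv j \<in> carrier_A n"
  by (auto simp: bv_def carrier_A_def)

lemma amul_bv_right:
  assumes "s \<in> {1..n}" shows "amul n m Ups u x (bv s) k = (\<Sum>r\<in>{1..n}. x r * sc n m Ups u r s k)"
proof -
  have "\<And>r. (\<Sum>s'\<in>{1..n}. x r * bv s s' * sc n m Ups u r s' k) = x r * sc n m Ups u r s k"
  proof -
    fix r
    have "(\<Sum>s'\<in>{1..n}. x r * bv s s' * sc n m Ups u r s' k) = (\<Sum>s'\<in>{1..n}. if s' = s then x r * sc n m Ups u r s' k else 0)"
      by (rule sum.cong) (auto simp: bv_def)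
    also have "\<dots> = x r * sc n m Ups u r s k" using assms by (simp add: sum.delta)
    finally show "(\<Sum>s'\<in>{1..n}. x r * bv s s' * sc n m Ups u r s' k) = x r * sc n m Ups u r s k" .
  qed
  then show ?thesis unfolding amul_def by simp
qed

lemma amul_bv: assumes "r \<in> {1..n}" "s \<in> {1..n}"
  shows "amul n m Ups u (bv r) (bv s) k = sc n m Ups u r s k"
proof -
  have "amul n m Ups u (bv r) (bv s) k = (\<Sum>r'\<in>{1..n}. bv r r' * sc n m Ups u r' s k)"
    using assms by (simp only: amul_bv_right)
  also have "\<dots> = (\<Sum>r'\<in>{1..n}. if r' = r then sc n m Ups u r' s k else 0)"
    by (rule sum.cong) (auto simp: bv_def)
  also have "\<dots> = sc n m Ups u r s k" using assms by (simp add: sum.delta)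
  finally show ?thesis .
qed

lemma Ups_block:
  assumes alg: "is_Anm n m Ups u"
    and r: "r \<in> {m+1..n}" and s: "s \<in> {m+1..n}" and k: "k \<in> {1..n}" and lt: "max r s < k"
    and neq: "u s \<noteq> u k"
  shows "Ups r s k = 0"
proof -
  have km: "k > m" using lt r by auto
  have v: "u k \<in> {1..m}" and mn: "m \<le> n" using alg km k unfolding is_Anm_def by auto
  have vn: "u k \<in> {1..n}" using v mn by auto
  have rn: "r \<in> {1..n}" and sn: "s \<in> {1..n}" using r s by auto
  have assoc: "amul n m Ups u (amul n m Ups u (bv r) (bv s)) (bv (u k)) =
               amul n m Ups u (bv r) (amul n m Ups u (bv s) (bv (u k)))"
    using alg bv_carrier[OF rn] bv_carrier[OF sn] bv_carrier[OF vn] unfolding is_Anm_def by blast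
  have L: "amul n m Ups u (amul n m Ups u (bv r) (bv s)) (bv (u k)) k = Ups r s k"
  proof -
    have "amul n m Ups u (amul n m Ups u (bv r) (bv s)) (bv (u k)) k
        = (\<Sum>j\<in>{1..n}. sc n m Ups u r s j * sc n m Ups u j (u k) k)"
    proof -
      have inner: "amul n m Ups u (bv r) (bv s) = (\<lambda>j. sc n m Ups u r s j)"
        using rn sn by (intro ext) (rule amul_bv)
      show ?thesis using vn by (simp only: inner amul_bv_right)
    qed
    also have "\<dots> = (\<Sum>j\<in>{1..n}. if j = k then sc n m Ups u r s k else 0)"
    proof (rule sum.cong[OF refl])
      fix j
      have "j \<noteq> k \<Longrightarrow> sc n m Ups u j (u k) k = 0"
        using v km by (cases "j \<le> m") (simp_all add: sc_11 sc_21)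
      moreover have "sc n m Ups u k (u k) k = 1" using v km by (simp add: sc_21)
      ultimately show "sc n m Ups u r s j * sc n m Ups u j (u k) k = (if j = k then sc n m Ups u r s k else 0)"
        by auto
    qed
    also have "\<dots> = sc n m Ups u r s k" using k by simp
    also have "\<dots> = Ups r s k" using r s lt k by (auto simp: sc_def)
    finally show ?thesis .
  qed
  have "amul n m Ups u (bv s) (bv (u k)) = (\<lambda>j. 0)"
  proof
    fix j show "amul n m Ups u (bv s) (bv (u k)) j = 0"
      using vn sn v s neq by (auto simp: amul_bv sc_21)
  qed
  then have R: "amul n m Ups u (bv r) (amul n m Ups u (bv s) (bv (u k))) k = 0"
    by (simp add: amul_def)
  show ?thesis using L R assoc by simp
qed

lemma mu_diag:
  assumes alg: "is_Anm n m Ups u" and k: "k \<in> {1..n}"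
  shows "mu n m Ups u a b k k h = zmap m a b h (blk m u k)"
proof (cases "k \<le> m")
  case True
  have "mu n m Ups u a b k k h = (\<Sum>r\<in>{1..n}. if r = k then zmap m a b h r else 0)"
    unfolding mu_def
  proof (rule sum.cong[OF refl])
    fix r show "zmap m a b h r * sc n m Ups u r k k = (if r = k then zmap m a b h r else 0)"
      using True by (cases "r \<le> m") (auto simp: sc_11 sc_21)
  qed
  then show ?thesis using k True by (simp add: blk_def)
next
  case False
  have uk: "u k \<in> {1..m}" "m \<le> n" using alg False k unfolding is_Anm_def by auto
  have "mu n m Ups u a b k k h = (\<Sum>r\<in>{1..n}. if r = u k then zmap m a b h r else 0)"
    unfolding mu_def
  proof (rule sum.cong[OF refl])
    fix r show "zmap m a b h r * sc n m Ups u r k k = (if r = u k then zmap m a b h r else 0)"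
      using False uk by (cases "r \<le> m") (auto simp: sc_12 sc_22)
  qed
  then show ?thesis using uk False by (simp add: blk_def)
qed

lemma mu_zero:
  assumes alg: "is_Anm n m Ups u" and k: "k \<in> {1..n}" and s: "s \<in> {1..n}"
    and ne: "s \<noteq> k" and nb: "\<not> (s < k \<and> blk m u s = blk m u k)"
  shows "mu n m Ups u a b k s h = 0"
  unfolding mu_def
proof (rule sum.neutral, rule ballI)
  fix r assume r: "r \<in> {1..n}"
  have "sc n m Ups u r s k = 0"
  proof (cases "r \<le> m \<and> s \<le> m")
    case True then show ?thesis using ne by (auto simp: sc_11)
  next
    case F1: False
    show ?thesis
    proof (cases "m < r \<and> m < s")
      case True
      show ?thesis
      proof (cases "max r s < k")
        case lt: True
        have "u s \<noteq> u k" using nb lt True by (auto simp: blk_def)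
        then have "Ups r s k = 0" using Ups_block[OF alg _ _ k lt] r s True by auto
        then show ?thesis using True by (simp add: sc_22)
      next
        case False then show ?thesis using True by (auto simp: sc_22)
      qed
    next
      case F2: False
      show ?thesis
      proof (cases "r \<le> m")
        case True then have "m < s" using F1 by auto
        then show ?thesis using True ne by (simp add: sc_12)
      next
        case False
        then have s': "s \<le> m" "m < r" using F2 by auto
        have "\<not> (s = u r \<and> k = r)" using nb s' by (auto simp: blk_def)
        then show ?thesis using s' by (simp add: sc_21)
      qed
    qed
  qed
  then show "zmap m a b h r * sc n m Ups u r s k = 0" by simp
qed



lemma integral_flip01:
  fixes f :: "real \<Rightarrow> complex"
  shows "integral {0..1} (\<lambda>t. f (1 - t)) = integral {0..1} f"
proof -
  have "integral {0..1} (\<lambda>t. f (1 - t)) = integral {-1..0} (\<lambda>x. f (x + 1))"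
    using Henstock_Kurzweil_Integration.integral_reflect_real[where a="-1" and b=0 and f="\<lambda>x. f (x + 1)"] by simp
  also have "\<dots> = integral {0..1} f"
    using integral_shift_real_ivl[where a=0 and b=1 and c=1 and f=f] by simp
  finally show ?thesis .
qed

lemma amul_add2: "amul n m Ups u x (\<lambda>s. y1 s + y2 s) k = amul n m Ups u x y1 k + amul n m Ups u x y2 k"
  unfolding amul_def by (simp add: sum.distrib algebra_simps)

lemma amul_cong2: "(\<And>s. s \<in> {1..n} \<Longrightarrow> y s = y' s) \<Longrightarrow> amul n m Ups u x y k = amul n m Ups u x y' k"
  unfolding amul_def by simp

lemma lin_times_cont:
  fixes ll :: "R3 \<Rightarrow> complex"
  assumes "bounded_linear ll" "continuous (at p) g"
  shows "((\<lambda>q. ll (q - p) * g q) has_derivative (\<lambda>h. ll h * g p)) (at p)"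
proof -
  obtain K where K: "\<And>h. norm (ll h) \<le> norm h * K" "K > 0"
    using bounded_linear.pos_bounded[OF assms(1)] by blast
  have lin: "ll (p + h - p) = ll h" for h by simp
  have "((\<lambda>h. g (p + h)) \<longlongrightarrow> g p) (at 0)"
    using assms(2) unfolding continuous_at by (rule LIM_offset_zero)
  then have g: "((\<lambda>h. g (p + h) - g p) \<longlongrightarrow> 0) (at 0)" by (rule LIM_zero)
  have "((\<lambda>h. norm (ll (p + h - p) * g (p + h) - ll (p - p) * g p - ll h * g p) / norm h) \<longlongrightarrow> 0) (at 0)"
  proof (rule Lim_null_comparison)
    show "\<forall>\<^sub>F h in at 0. norm (norm (ll (p + h - p) * g (p + h) - ll (p - p) * g p - ll h * g p) / norm h)
         \<le> K * norm (g (p + h) - g p)"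
    proof (rule eventuallyI)
      fix h :: R3
      have eq: "ll (p + h - p) * g (p + h) - ll (p - p) * g p - ll h * g p = ll h * (g (p + h) - g p)"
        using linear_0[OF bounded_linear.linear[OF assms(1)]] by (simp add: algebra_simps)
      show "norm (norm (ll (p + h - p) * g (p + h) - ll (p - p) * g p - ll h * g p) / norm h)
         \<le> K * norm (g (p + h) - g p)"
      proof (cases "h = 0")
        case True then show ?thesis by simp
      next
        case False
        have "norm (ll h * (g (p + h) - g p)) \<le> norm h * K * norm (g (p + h) - g p)"
          using K(1)[of h] by (simp add: norm_mult mult_right_mono)
        then show ?thesis unfolding eq using False
          by (simp add: divide_le_eq mult.commute mult.left_commute)
      qed
    qed
    show "((\<lambda>h. K * norm (g (p + h) - g p)) \<longlongrightarrow> 0) (at 0)"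
      using tendsto_mult_right_zero[OF tendsto_norm_zero[OF g]] by simp
  qed
  then show ?thesis
    unfolding has_derivative_at using assms(1) by (simp add: bounded_linear_mult_const)
qed

locale th3 =
  fixes n m :: nat
    and Ups :: "nat \<Rightarrow> nat \<Rightarrow> nat \<Rightarrow> complex" and u :: "nat \<Rightarrow> nat"
    and a b :: alg
    and Omega :: "(real \<times> real \<times> real) set"
    and Phi :: "alg \<Rightarrow> alg"
  assumes alg: "is_Anm n m Ups u"
    and a: "a \<in> carrier_A n" and b: "b \<in> carrier_A n"
    and standing: "\<forall>v\<in>{1..m}. range (\<lambda>p. zmap m a b p v) = UNIV"
    and openO: "open Omega"
    and cont: "continuous_on (zmap m a b ` Omega) Phi"
    and into: "Phi ` (zmap m a b ` Omega) \<subseteq> carrier_A n"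
    and tri: "\<forall>A B C. \<not> collinear {A, B, C} \<and>
                 zmap m a b ` (convex hull {A, B, C}) \<subseteq> zmap m a b ` Omega
                 \<longrightarrow> bnd_integral n m Ups u a b Phi A B C = (\<lambda>_. 0)"
begin

definition F :: "R3 \<Rightarrow> alg" where "F p = Phi (zmap m a b p)"

definition I :: "R3 \<Rightarrow> R3 \<Rightarrow> nat \<Rightarrow> complex" where
  "I P Q s = integral {0..1} (\<lambda>t. F (P + t *\<^sub>R (Q - P)) s)"

abbreviation "\<mu> \<equiv> mu n m Ups u a b"

definition E :: "R3 \<Rightarrow> R3 \<Rightarrow> nat \<Rightarrow> complex" where
  "E P Q k = (\<Sum>s\<in>{1..n}. \<mu> k s (Q - P) * I P Q s)"

lemma cont_zmap: "continuous_on S (zmap m a b)"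
  by (intro continuous_on_coordinatewise_then_product linear_continuous_on bl_zmap)

lemma cont_F: "continuous_on Omega (\<lambda>p. F p s)"
proof -
  have "continuous_on Omega (Phi \<circ> zmap m a b)"
    by (rule continuous_on_compose[OF cont_zmap cont])
  then show ?thesis unfolding F_def o_def by (rule continuous_on_product_then_coordinatewise)
qed

lemma edge_eq:
  assumes k: "k \<in> {1..n}"
  shows "E P Q k = edge_int (\<lambda>p. F p k) P Q fst
     + amul n m Ups u a (\<lambda>s. edge_int (\<lambda>p. F p s) P Q (\<lambda>v. fst (snd v))) k
     + amul n m Ups u b (\<lambda>s. edge_int (\<lambda>p. F p s) P Q (\<lambda>v. snd (snd v))) k"
proof -
  define d where "d = Q - P"
  have ei: "edge_int (\<lambda>p. F p s) P Q c = I P Q s * of_real (c d)" for s c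
    unfolding edge_int_def I_def d_def by simp
  have mu_split: "\<mu> k s d = of_real (fst d) * (if s = k then 1 else 0)
      + of_real (fst (snd d)) * (\<Sum>r\<in>{1..n}. a r * sc n m Ups u r s k)
      + of_real (snd (snd d)) * (\<Sum>r\<in>{1..n}. b r * sc n m Ups u r s k)" if s: "s \<in> {1..n}" for s
  proof -
    have "\<mu> k s d = of_real (fst d) * (\<Sum>r\<in>{1..n}. unitA m r * sc n m Ups u r s k)
      + of_real (fst (snd d)) * (\<Sum>r\<in>{1..n}. a r * sc n m Ups u r s k)
      + of_real (snd (snd d)) * (\<Sum>r\<in>{1..n}. b r * sc n m Ups u r s k)"
      unfolding mu_def zmap_def by (simp add: sum.distrib sum_distrib_left algebra_simps)
    then show ?thesis using unit_sc[OF alg s k] by simp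
  qed
  have "E P Q k = (\<Sum>s\<in>{1..n}. (of_real (fst d) * (if s = k then 1 else 0)) * I P Q s)
      + (\<Sum>s\<in>{1..n}. of_real (fst (snd d)) * (\<Sum>r\<in>{1..n}. a r * sc n m Ups u r s k) * I P Q s)
      + (\<Sum>s\<in>{1..n}. of_real (snd (snd d)) * (\<Sum>r\<in>{1..n}. b r * sc n m Ups u r s k) * I P Q s)"
  proof -
    have "E P Q k = (\<Sum>s\<in>{1..n}. (of_real (fst d) * (if s = k then 1 else 0)
      + of_real (fst (snd d)) * (\<Sum>r\<in>{1..n}. a r * sc n m Ups u r s k)
      + of_real (snd (snd d)) * (\<Sum>r\<in>{1..n}. b r * sc n m Ups u r s k)) * I P Q s)"
      unfolding E_def d_def[symmetric] by (rule sum.cong[OF refl]) (simp add: mu_split)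
    then show ?thesis by (simp only: distrib_right sum.distrib)
  qed
  also have "(\<Sum>s\<in>{1..n}. (of_real (fst d) * (if s = k then 1 else 0)) * I P Q s) = edge_int (\<lambda>p. F p k) P Q fst"
  proof -
    have "(\<Sum>s\<in>{1..n}. (of_real (fst d) * (if s = k then 1 else 0)) * I P Q s) =
        (\<Sum>s\<in>{1..n}. if s = k then I P Q s * of_real (fst d) else 0)"
      by (rule sum.cong) auto
    then show ?thesis using k by (simp add: ei)
  qed
  also have "(\<Sum>s\<in>{1..n}. of_real (fst (snd d)) * (\<Sum>r\<in>{1..n}. a r * sc n m Ups u r s k) * I P Q s)
      = amul n m Ups u a (\<lambda>s. edge_int (\<lambda>p. F p s) P Q (\<lambda>v. fst (snd v))) k"
    unfolding amul_def ei by (subst sum.swap) (simp add: sum_distrib_left sum_distrib_right algebra_simps)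
  also have "(\<Sum>s\<in>{1..n}. of_real (snd (snd d)) * (\<Sum>r\<in>{1..n}. b r * sc n m Ups u r s k) * I P Q s)
      = amul n m Ups u b (\<lambda>s. edge_int (\<lambda>p. F p s) P Q (\<lambda>v. snd (snd v))) k"
    unfolding amul_def ei by (subst sum.swap) (simp add: sum_distrib_left sum_distrib_right algebra_simps)
  finally show ?thesis .
qed

lemma bnd_eq:
  assumes k: "k \<in> {1..n}"
  shows "bnd_integral n m Ups u a b Phi A B C k = E A B k + E B C k + E C A k"
proof -
  let ?J = "\<lambda>c s. if s \<in> {1..n} then tri_int (\<lambda>p. Phi (zmap m a b p) s) A B C c else 0"
  have J: "?J c s = edge_int (\<lambda>p. F p s) A B c + edge_int (\<lambda>p. F p s) B C c + edge_int (\<lambda>p. F p s) C A c"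
    if "s \<in> {1..n}" for c s
    using that unfolding tri_int_def F_def by simp
  have "bnd_integral n m Ups u a b Phi A B C k = ?J fst k + amul n m Ups u a (?J (\<lambda>v. fst (snd v))) k
       + amul n m Ups u b (?J (\<lambda>v. snd (snd v))) k"
    unfolding bnd_integral_def Let_def by simp
  also have "amul n m Ups u a (?J (\<lambda>v. fst (snd v))) k =
     amul n m Ups u a (\<lambda>s. edge_int (\<lambda>p. F p s) A B (\<lambda>v. fst (snd v))) k
   + amul n m Ups u a (\<lambda>s. edge_int (\<lambda>p. F p s) B C (\<lambda>v. fst (snd v))) k
   + amul n m Ups u a (\<lambda>s. edge_int (\<lambda>p. F p s) C A (\<lambda>v. fst (snd v))) k"
    by (subst amul_cong2[OF J]) (auto simp: amul_add2)
  also have "amul n m Ups u b (?J (\<lambda>v. snd (snd v))) k =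
     amul n m Ups u b (\<lambda>s. edge_int (\<lambda>p. F p s) A B (\<lambda>v. snd (snd v))) k
   + amul n m Ups u b (\<lambda>s. edge_int (\<lambda>p. F p s) B C (\<lambda>v. snd (snd v))) k
   + amul n m Ups u b (\<lambda>s. edge_int (\<lambda>p. F p s) C A (\<lambda>v. snd (snd v))) k"
    by (subst amul_cong2[OF J]) (auto simp: amul_add2)
  finally show ?thesis using J[OF k] by (simp add: edge_eq[OF k] algebra_simps)
qed

lemma I_rev: "I Q P s = I P Q s"
proof -
  have "I Q P s = integral {0..1} (\<lambda>t. (\<lambda>t. F (P + t *\<^sub>R (Q - P)) s) (1 - t))"
    unfolding I_def by (rule integral_cong) (simp add: algebra_simps)
  also have "\<dots> = I P Q s" unfolding I_def by (rule integral_flip01)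
  finally show ?thesis .
qed

lemma E_rev: "E Q P k = - E P Q k"
proof -
  have "P - Q = - (Q - P)" by simp
  then show ?thesis unfolding E_def sum_negf[symmetric]
    by (intro sum.cong refl) (simp add: I_rev mu_lin algebra_simps)
qed

lemma E_self: "E P P k = 0"
  unfolding E_def by (simp add: mu_lin)

lemma I_self: "I P P s = F P s"
  unfolding I_def by simp

lemma tri_E:
  assumes nc: "\<not> collinear {A, B, C}" and S: "convex S" "S \<subseteq> Omega" and ABC: "A \<in> S" "B \<in> S" "C \<in> S"
    and k: "k \<in> {1..n}"
  shows "E A B k + E B C k + E C A k = 0"
proof -
  have "convex hull {A, B, C} \<subseteq> S" using S ABC by (simp add: hull_minimal)
  then have "zmap m a b ` (convex hull {A, B, C}) \<subseteq> zmap m a b ` Omega" using S by blast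
  then have "bnd_integral n m Ups u a b Phi A B C = (\<lambda>_. 0)" using tri nc by blast
  then show ?thesis using bnd_eq[OF k, of A B C] by simp
qed

lemma cont_I:
  assumes S: "convex S" "S \<subseteq> Omega" and P: "P \<in> S"
  shows "continuous_on S (\<lambda>q. I P q s)"
proof -
  have "continuous_on (S \<times> cbox 0 1) (\<lambda>(q, t). F (P + t *\<^sub>R (q - P)) s)"
  proof -
    have "continuous_on (S \<times> cbox 0 1) (\<lambda>z. P + snd z *\<^sub>R (fst z - P))"
      by (intro continuous_intros)
    moreover have "(\<lambda>z. P + snd z *\<^sub>R (fst z - P)) ` (S \<times> cbox 0 1) \<subseteq> Omega"
    proof (rule image_subsetI)
      fix z assume "z \<in> S \<times> cbox 0 (1::real)"
      then obtain q t where zq: "z = (q, t)" and q: "q \<in> S" and t: "t \<in> cbox 0 (1::real)" by auto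
      have "P + t *\<^sub>R (q - P) = (1 - t) *\<^sub>R P + t *\<^sub>R q" by (simp add: algebra_simps)
      moreover have "(1 - t) *\<^sub>R P + t *\<^sub>R q \<in> S"
        using S(1) P q t by (intro convexD) auto
      ultimately show "P + snd z *\<^sub>R (fst z - P) \<in> Omega" using S(2) zq by auto
    qed
    ultimately have "continuous_on (S \<times> cbox 0 1) (\<lambda>z. F (P + snd z *\<^sub>R (fst z - P)) s)"
      by (rule continuous_on_compose2[OF cont_F])
    then show ?thesis by (simp add: case_prod_beta)
  qed
  then have "continuous_on S (\<lambda>q. integral (cbox 0 1) (\<lambda>t. F (P + t *\<^sub>R (q - P)) s))"
    by (rule integral_continuous_on_param)
  then show ?thesis unfolding I_def by simp
qed

lemma cont_E:
  assumes S: "convex S" "S \<subseteq> Omega" and P: "P \<in> S"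
  shows "continuous_on S (\<lambda>q. E P q k)"
proof -
  have "continuous_on S (\<lambda>q. \<mu> k s (q - P))" for s
    by (rule bounded_linear.continuous_on[OF bl_mu]) (intro continuous_intros)
  then show ?thesis unfolding E_def
    by (intro continuous_intros cont_I[OF S P])
qed

lemma incr:
  assumes S: "ball p0 \<epsilon> \<subseteq> Omega" and p: "p \<in> ball p0 \<epsilon>" and q: "q \<in> ball p0 \<epsilon>" and k: "k \<in> {1..n}"
  shows "E p0 q k = E p0 p k + E p q k"
proof -
  let ?B = "ball p0 \<epsilon>"
  have p0B: "p0 \<in> ?B" using p by (auto simp: dist_commute intro: le_less_trans[OF zero_le_dist])
  have key: "E p0 q' k = E p0 p k + E p q' k" if q': "q' \<in> ?B" "\<not> collinear {p0, p, q'}" for q'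
    using tri_E[OF q'(2) convex_ball S p0B p q'(1) k] E_rev[of q' p0 k] by (simp add: algebra_simps)
  show ?thesis
  proof (cases "p = p0")
    case True then show ?thesis by (simp add: E_self)
  next
    case pne: False
    show ?thesis
    proof (cases "collinear {p0, p, q}")
      case False then show ?thesis using key q by blast
    next
      case col: True
      define d where "d = p - p0"
      have d0: "d \<noteq> 0" using pne by (simp add: d_def)
      define v :: R3 where "v = (if fst (snd d) = 0 \<and> snd (snd d) = 0 then (0, 1, 0) else (1, 0, 0))"
      have vnd: "v \<noteq> c *\<^sub>R d" for c
      proof (cases "fst (snd d) = 0 \<and> snd (snd d) = 0")
        case True
        then show ?thesis unfolding v_def by (auto simp: prod_eq_iff)
      next
        case False
        then show ?thesis unfolding v_def by (auto simp: prod_eq_iff)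
      qed
      have c2: "collinear {p0, q, p}" using col by (simp add: insert_commute)
      obtain w where w: "q = w *\<^sub>R p0 + (1 - w) *\<^sub>R p"
        using c2 pne unfolding collinear_3_expand by auto
      have nc: "\<not> collinear {p0, p, q + e *\<^sub>R v}" if e: "e > 0" for e
      proof
        assume "collinear {p0, p, q + e *\<^sub>R v}"
        then have "collinear {p0, q + e *\<^sub>R v, p}" by (simp add: insert_commute)
        then obtain w' where w': "q + e *\<^sub>R v = w' *\<^sub>R p0 + (1 - w') *\<^sub>R p"
          using pne unfolding collinear_3_expand by auto
        have "e *\<^sub>R v = (q + e *\<^sub>R v) - q" by simp
        also have "\<dots> = (w' *\<^sub>R p0 + (1 - w') *\<^sub>R p) - (w *\<^sub>R p0 + (1 - w) *\<^sub>R p)"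
          using w w' by simp
        also have "\<dots> = (w - w') *\<^sub>R d" unfolding d_def by (simp add: scaleR_diff_left scaleR_diff_right)
        finally have "e *\<^sub>R v = (w - w') *\<^sub>R d" .
        then have "(1 / e) *\<^sub>R (e *\<^sub>R v) = (1 / e) *\<^sub>R ((w - w') *\<^sub>R d)" by simp
        then have "v = ((w - w') / e) *\<^sub>R d" using e by (simp add: divide_inverse_commute)
        then show False using vnd by blast
      qed
      define \<phi> where "\<phi> = (\<lambda>q'. E p0 q' k - E p0 p k - E p q' k)"
      have c\<phi>: "continuous_on ?B \<phi>"
        unfolding \<phi>_def by (intro continuous_intros cont_E[OF convex_ball S p0B] cont_E[OF convex_ball S p])
      then have "isCont \<phi> q" using q by (simp add: continuous_on_eq_continuous_at)
      moreover have lim: "((\<lambda>e. q + e *\<^sub>R v) \<longlongrightarrow> q) (at_right 0)"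
        by (rule tendsto_eq_intros refl)+ simp
      ultimately have L: "((\<lambda>e. \<phi> (q + e *\<^sub>R v)) \<longlongrightarrow> \<phi> q) (at_right 0)"
        by (rule isCont_tendsto_compose)
      have ev: "\<forall>\<^sub>F e in at_right 0. q + e *\<^sub>R v \<in> ?B"
        using topological_tendstoD[OF lim open_ball q] .
      have "\<forall>\<^sub>F e in at_right 0. \<phi> (q + e *\<^sub>R v) = 0"
        using ev eventually_at_right_less[of 0]
      proof eventually_elim
        case (elim e)
        then show ?case using key[OF elim(1) nc] unfolding \<phi>_def by simp
      qed
      then have "((\<lambda>e. \<phi> (q + e *\<^sub>R v)) \<longlongrightarrow> 0) (at_right 0)"
        by (rule tendsto_eventually)
      then have "\<phi> q = 0" using L by (rule tendsto_unique[OF trivial_limit_at_right_real, rotated])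
      then show ?thesis unfolding \<phi>_def by (simp add: algebra_simps)
    qed
  qed
qed

lemma G_deriv:
  assumes S: "ball p0 \<epsilon> \<subseteq> Omega" and p: "p \<in> ball p0 \<epsilon>" and k: "k \<in> {1..n}"
  shows "((\<lambda>q. E p0 q k) has_derivative (\<lambda>h. \<Sum>s\<in>{1..n}. \<mu> k s h * F p s)) (at p)"
proof -
  have ci: "continuous (at p) (\<lambda>q. I p q s)" for s
    using cont_I[OF convex_ball S p] p by (simp add: continuous_on_eq_continuous_at)
  have "((\<lambda>q. E p0 p k + (\<Sum>s\<in>{1..n}. \<mu> k s (q - p) * I p q s)) has_derivative
      (\<lambda>h. 0 + (\<Sum>s\<in>{1..n}. \<mu> k s h * I p p s))) (at p)"
    by (intro has_derivative_add has_derivative_const has_derivative_sum lin_times_cont bl_mu ci)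
  then have D: "((\<lambda>q. E p0 p k + (\<Sum>s\<in>{1..n}. \<mu> k s (q - p) * I p q s)) has_derivative
      (\<lambda>h. \<Sum>s\<in>{1..n}. \<mu> k s h * F p s)) (at p)"
    by (simp add: I_self)
  show ?thesis
    by (rule has_derivative_transform_within_open[OF D open_ball p])
       (use incr[OF S p _ k] in \<open>simp add: E_def\<close>)
qed

end



lemma coord_exists:
  fixes \<alpha> \<beta> :: complex
  defines "\<xi> \<equiv> (\<lambda>h::R3. complex_of_real (fst h) + complex_of_real (fst (snd h)) * \<alpha> + complex_of_real (snd (snd h)) * \<beta>)"
  assumes surj: "\<exists>h. \<xi> h = \<i>"
  shows "\<exists>\<rho> x y \<kappa>. bounded_linear \<rho> \<and> \<xi> x = 1 \<and> \<xi> y = \<i> \<and> \<xi> \<kappa> = 0 \<and> \<rho> x = 0 \<and> \<rho> y = 0 \<and> \<rho> \<kappa> = 1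
     \<and> (\<forall>v. v = Re (\<xi> v) *\<^sub>R x + Im (\<xi> v) *\<^sub>R y + \<rho> v *\<^sub>R \<kappa>)"
proof -
  have "Im \<alpha> \<noteq> 0 \<or> Im \<beta> \<noteq> 0"
  proof (rule ccontr)
    assume "\<not> (Im \<alpha> \<noteq> 0 \<or> Im \<beta> \<noteq> 0)"
    then have "Im (\<xi> h) = 0" for h unfolding \<xi>_def by simp
    then show False using surj by (metis complex.sel(2) zero_neq_one imaginary_unit.sel(2))
  qed
  then show ?thesis
  proof
    assume A: "Im \<alpha> \<noteq> 0"
    define x :: R3 where "x = (1, 0, 0)"
    define y :: R3 where "y = (- Re \<alpha> / Im \<alpha>, 1 / Im \<alpha>, 0)"
    define \<kappa> :: R3 where "\<kappa> = (- Re \<beta> + Re \<alpha> * Im \<beta> / Im \<alpha>, - Im \<beta> / Im \<alpha>, 1)"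
    define \<rho> :: "R3 \<Rightarrow> real" where "\<rho> = (\<lambda>v. snd (snd v))"
    have "bounded_linear \<rho>" unfolding \<rho>_def
      by (intro bounded_linear_compose[OF bounded_linear_snd] bounded_linear_snd)
    moreover have "\<xi> x = 1" "\<xi> y = \<i>" "\<xi> \<kappa> = 0" "\<rho> x = 0" "\<rho> y = 0" "\<rho> \<kappa> = 1"
      unfolding \<xi>_def x_def y_def \<kappa>_def \<rho>_def using A
      by (simp_all add: complex_eq_iff field_simps)
    moreover have "\<forall>v. v = Re (\<xi> v) *\<^sub>R x + Im (\<xi> v) *\<^sub>R y + \<rho> v *\<^sub>R \<kappa>"
      unfolding \<xi>_def x_def y_def \<kappa>_def \<rho>_def using A
      by (simp add: prod_eq_iff field_simps)
    ultimately show ?thesis by blast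
  next
    assume B: "Im \<beta> \<noteq> 0"
    define x :: R3 where "x = (1, 0, 0)"
    define y :: R3 where "y = (- Re \<beta> / Im \<beta>, 0, 1 / Im \<beta>)"
    define \<kappa> :: R3 where "\<kappa> = (- Re \<alpha> + Re \<beta> * Im \<alpha> / Im \<beta>, 1, - Im \<alpha> / Im \<beta>)"
    define \<rho> :: "R3 \<Rightarrow> real" where "\<rho> = (\<lambda>v. fst (snd v))"
    have "bounded_linear \<rho>" unfolding \<rho>_def
      by (intro bounded_linear_compose[OF bounded_linear_fst] bounded_linear_snd)
    moreover have "\<xi> x = 1" "\<xi> y = \<i>" "\<xi> \<kappa> = 0" "\<rho> x = 0" "\<rho> y = 0" "\<rho> \<kappa> = 1"
      unfolding \<xi>_def x_def y_def \<kappa>_def \<rho>_def using B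
      by (simp_all add: complex_eq_iff field_simps)
    moreover have "\<forall>v. v = Re (\<xi> v) *\<^sub>R x + Im (\<xi> v) *\<^sub>R y + \<rho> v *\<^sub>R \<kappa>"
      unfolding \<xi>_def x_def y_def \<kappa>_def \<rho>_def using B
      by (simp add: prod_eq_iff field_simps)
    ultimately show ?thesis by blast
  qed
qed

context coord
begin

lemma decomp:
  assumes "bounded_linear ll"
  shows "ll v = \<xi> v * ((ll x - \<i> * ll y) / 2) + cnj (\<xi> v) * ((ll x + \<i> * ll y) / 2) + complex_of_real (\<rho> v) * ll \<kappa>"
proof -
  interpret L: bounded_linear ll by fact
  have "ll v = ll (Re (\<xi> v) *\<^sub>R x + Im (\<xi> v) *\<^sub>R y + \<rho> v *\<^sub>R \<kappa>)" using recon[of v] by simp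
  also have "\<dots> = of_real (Re (\<xi> v)) * ll x + of_real (Im (\<xi> v)) * ll y + of_real (\<rho> v) * ll \<kappa>"
    by (simp add: L.add L.scale scaleR_conv_of_real)
  also have "\<dots> = \<xi> v * ((ll x - \<i> * ll y) / 2) + cnj (\<xi> v) * ((ll x + \<i> * ll y) / 2) + complex_of_real (\<rho> v) * ll \<kappa>"
    by (simp add: complex_eq_iff field_simps)
  finally show ?thesis .
qed

lemma p0_U: "p0 \<in> U"
  using \<delta>pos by (simp add: U_def W_def Rr_def lin\<xi> lin\<rho>)

lemma U_sub: "U \<subseteq> ball p0 (\<delta> * (norm x + norm y + norm \<kappa> + 1))"
proof
  fix p assume p: "p \<in> U"
  have "p - p0 = Re (W p) *\<^sub>R x + Im (W p) *\<^sub>R y + Rr p *\<^sub>R \<kappa>"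
    unfolding W_def Rr_def by (rule recon)
  then have "norm (p - p0) \<le> norm (Re (W p) *\<^sub>R x + Im (W p) *\<^sub>R y) + norm (Rr p *\<^sub>R \<kappa>)"
    using norm_triangle_ineq[of "Re (W p) *\<^sub>R x + Im (W p) *\<^sub>R y" "Rr p *\<^sub>R \<kappa>"] by simp
  also have "\<dots> \<le> norm (Re (W p) *\<^sub>R x) + norm (Im (W p) *\<^sub>R y) + norm (Rr p *\<^sub>R \<kappa>)"
    using norm_triangle_ineq[of "Re (W p) *\<^sub>R x" "Im (W p) *\<^sub>R y"] by linarith
  also have "\<dots> = \<bar>Re (W p)\<bar> * norm x + \<bar>Im (W p)\<bar> * norm y + \<bar>Rr p\<bar> * norm \<kappa>"
    by simp
  also have "\<dots> \<le> \<delta> * norm x + \<delta> * norm y + \<delta> * norm \<kappa>"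
  proof -
    have "\<bar>Re (W p)\<bar> \<le> \<delta>" "\<bar>Im (W p)\<bar> \<le> \<delta>" "\<bar>Rr p\<bar> \<le> \<delta>"
      using p abs_Re_le_cmod[of "W p"] abs_Im_le_cmod[of "W p"] by (auto simp: U_def)
    then show ?thesis by (intro add_mono mult_right_mono) auto
  qed
  also have "\<dots> < \<delta> * (norm x + norm y + norm \<kappa> + 1)"
    using \<delta>pos by (simp add: algebra_simps)
  finally show "p \<in> ball p0 (\<delta> * (norm x + norm y + norm \<kappa> + 1))"
    by (simp add: dist_norm norm_minus_commute)
qed

end


lemma diff_quot:
  fixes g :: "R3 \<Rightarrow> complex"
  assumes "(g has_derivative D) (at p0)"
  shows "((\<lambda>e. (g (p0 + e *\<^sub>R v) - g p0) / complex_of_real e) \<longlongrightarrow> D v) (at_right 0)"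
proof -
  have bl: "bounded_linear D" using assms has_derivative_bounded_linear by blast
  have "((\<lambda>e. g (p0 + e *\<^sub>R v)) has_derivative (\<lambda>t. D (t *\<^sub>R v))) (at 0 within {0<..})"
  proof -
    have f: "((\<lambda>e. p0 + e *\<^sub>R v) has_derivative (\<lambda>t. t *\<^sub>R v)) (at 0 within {0<..})"
      by (auto intro!: derivative_eq_intros)
    have "(g has_derivative D) (at (p0 + 0 *\<^sub>R v))" using assms by simp
    from has_derivative_compose[OF f this] show ?thesis .
  qed
  then have "((\<lambda>t. (1 / norm (t - 0)) *\<^sub>R (g (p0 + t *\<^sub>R v) - (g (p0 + 0 *\<^sub>R v) + D ((t - 0) *\<^sub>R v)))) \<longlongrightarrow> 0) (at_right 0)"
    unfolding has_derivative_within by blast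
  moreover have "\<forall>\<^sub>F t in at_right 0. (1 / norm (t - 0)) *\<^sub>R (g (p0 + t *\<^sub>R v) - (g (p0 + 0 *\<^sub>R v) + D ((t - 0) *\<^sub>R v)))
       = (g (p0 + t *\<^sub>R v) - g p0) / complex_of_real t - D v"
    using eventually_at_right_less[of 0]
  proof eventually_elim
    case (elim t)
    have "D (t *\<^sub>R v) = complex_of_real t * D v"
      using linear_scale[OF bounded_linear.linear[OF bl], of t v] by (simp add: scaleR_conv_of_real)
    then show ?case using elim by (simp add: scaleR_conv_of_real field_simps)
  qed
  ultimately have "((\<lambda>t. (g (p0 + t *\<^sub>R v) - g p0) / complex_of_real t - D v) \<longlongrightarrow> 0) (at_right 0)"
    using tendsto_cong by fastforce
  then show ?thesis by (simp add: LIM_zero_iff)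
qed

context th3
begin

lemma block_cls:
  assumes S: "ball p0 \<epsilon> \<subseteq> Omega" and C: "coord \<xi> \<rho> \<delta> x y \<kappa>" and US: "coord.U \<xi> \<rho> p0 \<delta> \<subseteq> ball p0 \<epsilon>"
    and \<xi>def: "\<And>h. \<xi> h = zmap m a b h u0"
  shows "k \<in> {1..n} \<Longrightarrow> blk m u k = u0 \<Longrightarrow> coord.cls \<xi> \<rho> p0 \<delta> (\<lambda>p. F p k) \<and> coord.cls \<xi> \<rho> p0 \<delta> (\<lambda>p. E p0 p k)"
proof (induction k rule: less_induct)
  case (less k)
  interpret coord \<xi> \<rho> p0 \<delta> x y \<kappa> by (rule C)
  define S' where "S' = {s\<in>{1..n}. s < k \<and> blk m u s = u0}"
  have finS': "finite S'" unfolding S'_def by auto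
  have IH: "cls (\<lambda>p. F p s)" if "s \<in> S'" for s using less.IH that by (auto simp: S'_def)
  have DG: "((\<lambda>q. E p0 q k) has_derivative (\<lambda>h. \<Sum>s\<in>{1..n}. \<mu> k s h * F p s)) (at p)" if "p \<in> U" for p
  proof -
    have "p \<in> ball p0 \<epsilon>" using US that by auto
    from G_deriv[OF S this less.prems(1)] show ?thesis .
  qed
  have sumeq: "(\<Sum>s\<in>{1..n}. \<mu> k s h * F p s) = \<xi> h * F p k + (\<Sum>s\<in>S'. \<mu> k s h * F p s)" for h p
  proof -
    have "(\<Sum>s\<in>{1..n}. \<mu> k s h * F p s) = \<mu> k k h * F p k + (\<Sum>s\<in>{1..n} - {k}. \<mu> k s h * F p s)"
      using less.prems(1) by (simp add: sum.remove)
    also have "\<mu> k k h = \<xi> h" using mu_diag[OF alg less.prems(1)] less.prems(2) \<xi>def by simp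
    also have "(\<Sum>s\<in>{1..n} - {k}. \<mu> k s h * F p s) = (\<Sum>s\<in>S'. \<mu> k s h * F p s)"
    proof (rule sum.mono_neutral_right)
      show "S' \<subseteq> {1..n} - {k}" unfolding S'_def by auto
      show "\<forall>i\<in>{1..n} - {k} - S'. \<mu> k i h * F p i = 0"
        using mu_zero[OF alg less.prems(1)] less.prems(2) unfolding S'_def by auto
    qed auto
    finally show ?thesis .
  qed
  define X where "X = (\<lambda>s. (\<mu> k s x - \<i> * \<mu> k s y) / 2)"
  define Y where "Y = (\<lambda>s. (\<mu> k s x + \<i> * \<mu> k s y) / 2)"
  define Z where "Z = (\<lambda>s. \<mu> k s \<kappa>)"
  have dec: "\<mu> k s h = \<xi> h * X s + cnj (\<xi> h) * Y s + complex_of_real (\<rho> h) * Z s" for s h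
    unfolding X_def Y_def Z_def by (rule decomp[OF bl_mu])
  define \<Psi> where "\<Psi> = (\<lambda>p. F p k + (\<Sum>s\<in>S'. X s * F p s))"
  define \<alpha> where "\<alpha> = (\<lambda>p. \<Sum>s\<in>S'. Y s * F p s)"
  define \<beta> where "\<beta> = (\<lambda>p. \<Sum>s\<in>S'. Z s * F p s)"
  have D2: "((\<lambda>q. E p0 q k) has_derivative (\<lambda>h. \<xi> h * \<Psi> p + cnj (\<xi> h) * \<alpha> p + complex_of_real (\<rho> h) * \<beta> p)) (at p)"
    if "p \<in> U" for p
  proof (rule has_derivative_eq_rhs[OF DG[OF that]])
    show "(\<lambda>h. \<Sum>s\<in>{1..n}. \<mu> k s h * F p s) = (\<lambda>h. \<xi> h * \<Psi> p + cnj (\<xi> h) * \<alpha> p + complex_of_real (\<rho> h) * \<beta> p)"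
    proof
      fix h
      show "(\<Sum>s\<in>{1..n}. \<mu> k s h * F p s) = \<xi> h * \<Psi> p + cnj (\<xi> h) * \<alpha> p + complex_of_real (\<rho> h) * \<beta> p"
      proof -
        have "(\<Sum>s\<in>{1..n}. \<mu> k s h * F p s) = \<xi> h * F p k + (\<Sum>s\<in>S'. \<mu> k s h * F p s)"
          by (rule sumeq)
        also have "\<dots> = \<xi> h * \<Psi> p + cnj (\<xi> h) * \<alpha> p + complex_of_real (\<rho> h) * \<beta> p"
          unfolding \<Psi>_def \<alpha>_def \<beta>_def dec
          by (simp add: sum.distrib distrib_right distrib_left sum_distrib_left algebra_simps)
        finally show ?thesis .
      qed
    qed
  qed
  have c\<alpha>: "cls \<alpha>" unfolding \<alpha>_def by (intro cls_sum finS' cls_cmult IH)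
  have c\<beta>: "cls \<beta>" unfolding \<beta>_def by (intro cls_sum finS' cls_cmult IH)
  have cG: "cls (\<lambda>p. E p0 p k)" by (rule step[OF c\<alpha> c\<beta> D2])
  obtain fw fwb fr where fd: "cls fw" "cls fwb" "cls fr"
    "\<forall>p\<in>U. ((\<lambda>p. E p0 p k) has_derivative (\<lambda>h. \<xi> h * fw p + cnj (\<xi> h) * fwb p + complex_of_real (\<rho> h) * fr p)) (at p)"
    using cls_deriv[OF cG] by blast
  have "cls (\<lambda>p. \<xi> (1,0,0) * fw p + cnj (\<xi> (1,0,0)) * fwb p + complex_of_real (\<rho> (1,0,0)) * fr p)"
    by (intro cls_add cls_cmult fd)
  moreover have "\<xi> (1,0,0) * fw p + cnj (\<xi> (1,0,0)) * fwb p + complex_of_real (\<rho> (1,0,0)) * fr p = F p k"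
    if "p \<in> U" for p
  proof -
    have "(\<lambda>h. \<Sum>s\<in>{1..n}. \<mu> k s h * F p s) = (\<lambda>h. \<xi> h * fw p + cnj (\<xi> h) * fwb p + complex_of_real (\<rho> h) * fr p)"
      using has_derivative_unique[OF DG[OF that]] fd(4) that by blast
    then have "(\<Sum>s\<in>{1..n}. \<mu> k s (1,0,0) * F p s) = \<xi> (1,0,0) * fw p + cnj (\<xi> (1,0,0)) * fwb p + complex_of_real (\<rho> (1,0,0)) * fr p"
      by meson
    moreover have "(\<Sum>s\<in>{1..n}. \<mu> k s (1,0,0) * F p s) = F p k"
    proof -
      have "(\<Sum>s\<in>{1..n}. \<mu> k s (1,0,0) * F p s) = (\<Sum>s\<in>{1..n}. if s = k then F p s else 0)"
        by (rule sum.cong) (auto simp: mu_e1[OF alg _ less.prems(1)])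
      then show ?thesis using less.prems(1) by simp
    qed
    ultimately show ?thesis by simp
  qed
  ultimately have "cls (\<lambda>p. F p k)" by (rule cls_cong)
  then show ?case using cG by blast
qed

end


lemma tendsto_fun_componentwise:
  fixes f :: "'x \<Rightarrow> nat \<Rightarrow> complex"
  assumes "\<And>k. ((\<lambda>e. f e k) \<longlongrightarrow> l k) F"
  shows "(f \<longlongrightarrow> l) F"
proof -
  have "limitin (product_topology (\<lambda>_. euclidean) UNIV) f l F"
    unfolding limitin_componentwise using assms by (simp add: PiE_UNIV_domain)
  then show ?thesis by (simp add: euclidean_product_topology)
qed

context th3
begin

lemma coord_data:
  assumes u0: "u0 \<in> {1..m}" and e: "\<epsilon> > 0"
  shows "\<exists>\<rho> x y \<kappa> \<delta>. coord (\<lambda>h. zmap m a b h u0) \<rho> \<delta> x y \<kappa> \<and> coord.U (\<lambda>h. zmap m a b h u0) \<rho> p0 \<delta> \<subseteq> ball p0 \<epsilon>"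
proof -
  have zeq: "zmap m a b h u0 = complex_of_real (fst h) + complex_of_real (fst (snd h)) * a u0 + complex_of_real (snd (snd h)) * b u0" for h
    using u0 by (auto simp: zmap_def unitA_def)
  have "\<exists>h. zmap m a b h u0 = \<i>" using standing u0 by (metis UNIV_I rangeE)
  then have "\<exists>h::R3. complex_of_real (fst h) + complex_of_real (fst (snd h)) * a u0 + complex_of_real (snd (snd h)) * b u0 = \<i>"
    by (simp add: zeq)
  from coord_exists[of "a u0" "b u0", OF this]
  obtain \<rho> x y \<kappa> where r: "bounded_linear \<rho>" "zmap m a b x u0 = 1" "zmap m a b y u0 = \<i>" "zmap m a b \<kappa> u0 = 0"
     "\<rho> x = 0" "\<rho> y = 0" "\<rho> \<kappa> = 1"
     "\<forall>v. v = Re (zmap m a b v u0) *\<^sub>R x + Im (zmap m a b v u0) *\<^sub>R y + \<rho> v *\<^sub>R \<kappa>"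
    unfolding zeq[symmetric] by blast
  define \<delta> where "\<delta> = \<epsilon> / (norm x + norm y + norm \<kappa> + 1)"
  have "0 \<le> norm x + norm y + norm \<kappa>" by simp
  then have pos: "norm x + norm y + norm \<kappa> + 1 > 0" by linarith
  have dpos: "\<delta> > 0" unfolding \<delta>_def using e pos by simp
  have C: "coord (\<lambda>h. zmap m a b h u0) \<rho> \<delta> x y \<kappa>"
    unfolding coord_def using r bl_zmap dpos by auto
  have "coord.U (\<lambda>h. zmap m a b h u0) \<rho> p0 \<delta> \<subseteq> ball p0 (\<delta> * (norm x + norm y + norm \<kappa> + 1))"
    by (rule coord.U_sub[OF C])
  also have "\<delta> * (norm x + norm y + norm \<kappa> + 1) = \<epsilon>" unfolding \<delta>_def using pos by simp
  finally show ?thesis using C by blast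
qed

lemma blk_range: "k \<in> {1..n} \<Longrightarrow> blk m u k \<in> {1..m}"
  using alg unfolding is_Anm_def blk_def by auto

lemma F_diff:
  assumes S: "ball p0 \<epsilon> \<subseteq> Omega" and e: "\<epsilon> > 0" and s: "s \<in> {1..n}"
  shows "\<exists>D. ((\<lambda>p. F p s) has_derivative D) (at p0)"
proof -
  obtain \<rho> x y \<kappa> \<delta> where C: "coord (\<lambda>h. zmap m a b h (blk m u s)) \<rho> \<delta> x y \<kappa>"
    and US: "coord.U (\<lambda>h. zmap m a b h (blk m u s)) \<rho> p0 \<delta> \<subseteq> ball p0 \<epsilon>"
    using coord_data[OF blk_range[OF s] e] by blast
  interpret coord "\<lambda>h. zmap m a b h (blk m u s)" \<rho> p0 \<delta> x y \<kappa> by (rule C)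
  have "cls (\<lambda>p. F p s)" using block_cls[OF S C US _ s] by simp
  then show ?thesis using cls_deriv p0_U by blast
qed

lemma key:
  assumes S: "ball p0 \<epsilon> \<subseteq> Omega" and e: "\<epsilon> > 0" and k: "k \<in> {1..n}"
    and DF: "\<forall>s\<in>{1..n}. ((\<lambda>p. F p s) has_derivative DF s) (at p0)"
  shows "DF k h = (\<Sum>s\<in>{1..n}. \<mu> k s h * DF s (1,0,0))"
proof -
  obtain \<rho> x y \<kappa> \<delta> where C: "coord (\<lambda>h. zmap m a b h (blk m u k)) \<rho> \<delta> x y \<kappa>"
    and US: "coord.U (\<lambda>h. zmap m a b h (blk m u k)) \<rho> p0 \<delta> \<subseteq> ball p0 \<epsilon>"
    using coord_data[OF blk_range[OF k] e] by blast
  interpret coord "\<lambda>h. zmap m a b h (blk m u k)" \<rho> p0 \<delta> x y \<kappa> by (rule C)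
  have cG: "cls (\<lambda>p. E p0 p k)" using block_cls[OF S C US _ k] by simp
  obtain G' G'' where G: "\<forall>h. cls (G' h)" "\<forall>p\<in>U. ((\<lambda>p. E p0 p k) has_derivative (\<lambda>h. G' h p)) (at p)"
     "\<forall>h p. p \<in> U \<longrightarrow> ((G' h) has_derivative (\<lambda>k. G'' h k p)) (at p)"
     "\<forall>h k p. p \<in> U \<longrightarrow> G'' h k p = G'' k h p"
    using cls_sym[OF cG] by blast
  have star: "G' h q = (\<Sum>s\<in>{1..n}. \<mu> k s h * F q s)" if q: "q \<in> U" for h q
  proof -
    have "q \<in> ball p0 \<epsilon>" using US q by auto
    from has_derivative_unique[OF G(2)[rule_format, OF q] G_deriv[OF S this k]]
    show ?thesis by meson
  qed
  have e1: "(\<Sum>s\<in>{1..n}. \<mu> k s (1,0,0) * F q s) = F q k" for q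
  proof -
    have "(\<Sum>s\<in>{1..n}. \<mu> k s (1,0,0) * F q s) = (\<Sum>s\<in>{1..n}. if s = k then F q s else 0)"
      by (rule sum.cong) (auto simp: mu_e1[OF alg _ k])
    then show ?thesis using k by simp
  qed
  have "((\<lambda>p. F p k) has_derivative (\<lambda>k'. G'' (1,0,0) k' p0)) (at p0)"
  proof (rule has_derivative_transform_within_open[OF G(3)[rule_format, OF p0_U] open_U p0_U])
    fix q assume q: "q \<in> U"
    show "G' (1,0,0) q = F q k" using star[OF q, of "(1,0,0)"] e1[of q] by simp
  qed
  then have 1: "DF k = (\<lambda>k'. G'' (1,0,0) k' p0)"
    using has_derivative_unique DF k by blast
  have "((\<lambda>q. \<Sum>s\<in>{1..n}. \<mu> k s h * F q s) has_derivative (\<lambda>k'. \<Sum>s\<in>{1..n}. \<mu> k s h * DF s k')) (at p0)"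
    using DF by (intro has_derivative_sum has_derivative_mult_right) auto
  then have "((G' h) has_derivative (\<lambda>k'. \<Sum>s\<in>{1..n}. \<mu> k s h * DF s k')) (at p0)"
    by (rule has_derivative_transform_within_open[OF _ open_U p0_U]) (simp add: star)
  then have 2: "(\<lambda>k'. G'' h k' p0) = (\<lambda>k'. \<Sum>s\<in>{1..n}. \<mu> k s h * DF s k')"
    using has_derivative_unique G(3) p0_U by blast
  have "DF k h = G'' (1,0,0) h p0" using 1 by simp
  also have "\<dots> = G'' h (1,0,0) p0" using G(4) p0_U by blast
  also have "\<dots> = (\<Sum>s\<in>{1..n}. \<mu> k s h * DF s (1,0,0))" using 2 by meson
  finally show ?thesis .
qed

lemma monogenic_main: "monogenic n m Ups u a b Phi (zmap m a b ` Omega)"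
  unfolding monogenic_def
proof
  fix \<zeta> assume "\<zeta> \<in> zmap m a b ` Omega"
  then obtain p0 where p0: "p0 \<in> Omega" and z: "\<zeta> = zmap m a b p0" by auto
  obtain \<epsilon> where e: "\<epsilon> > 0" and S: "ball p0 \<epsilon> \<subseteq> Omega"
    using openO p0 open_contains_ball by blast
  have "\<forall>s\<in>{1..n}. \<exists>D. ((\<lambda>p. F p s) has_derivative D) (at p0)"
    using F_diff[OF S e] by blast
  then obtain DF where DF: "\<forall>s\<in>{1..n}. ((\<lambda>p. F p s) has_derivative DF s) (at p0)"
    by metis
  define Phi' where "Phi' = (\<lambda>s. if s \<in> {1..n} then DF s (1,0,0) else 0)"
  have Pc: "Phi' \<in> carrier_A n" unfolding Phi'_def carrier_A_def by auto
  have "let h = zmap m a b p in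
        ((\<lambda>\<epsilon>::real. (\<lambda>k. (Phi (\<lambda>j. \<zeta> j + complex_of_real \<epsilon> * h j) k - Phi \<zeta> k) / complex_of_real \<epsilon>))
          \<longlongrightarrow> amul n m Ups u h Phi') (at_right 0)" for p
    unfolding Let_def
  proof (rule tendsto_fun_componentwise)
    fix k
    have zeq: "(\<lambda>j. zmap m a b p0 j + complex_of_real e * zmap m a b p j) = zmap m a b (p0 + e *\<^sub>R p)" for e
      by (rule ext) (simp add: zmap_lin)
    have "(\<lambda>e. (Phi (\<lambda>j. \<zeta> j + complex_of_real e * zmap m a b p j) k - Phi \<zeta> k) / complex_of_real e)
        = (\<lambda>e. (F (p0 + e *\<^sub>R p) k - F p0 k) / complex_of_real e)"
      unfolding z zeq F_def by simp
    moreover have "((\<lambda>e. (F (p0 + e *\<^sub>R p) k - F p0 k) / complex_of_real e) \<longlongrightarrow> amul n m Ups u (zmap m a b p) Phi' k) (at_right 0)"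
    proof (cases "k \<in> {1..n}")
      case True
      have "((\<lambda>e. (F (p0 + e *\<^sub>R p) k - F p0 k) / complex_of_real e) \<longlongrightarrow> DF k p) (at_right 0)"
        using diff_quot[of "\<lambda>q. F q k" "DF k" p0 p] DF True by blast
      moreover have "DF k p = amul n m Ups u (zmap m a b p) Phi' k"
        unfolding amul_mu key[OF S e True DF] Phi'_def by (rule sum.cong) auto
      ultimately show ?thesis by simp
    next
      case False
      have lim: "((\<lambda>e. p0 + e *\<^sub>R p) \<longlongrightarrow> p0) (at_right 0)"
        by (rule tendsto_eq_intros refl)+ simp
      have "\<forall>\<^sub>F e in at_right 0. p0 + e *\<^sub>R p \<in> Omega"
        using topological_tendstoD[OF lim openO p0] .
      then have "\<forall>\<^sub>F e in at_right 0. (F (p0 + e *\<^sub>R p) k - F p0 k) / complex_of_real e = 0"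
      proof eventually_elim
        case (elim e)
        have "F (p0 + e *\<^sub>R p) \<in> carrier_A n" "F p0 \<in> carrier_A n"
          using into elim p0 unfolding F_def by auto
        then show ?case using False by (simp add: carrier_A_def)
      qed
      then have "((\<lambda>e. (F (p0 + e *\<^sub>R p) k - F p0 k) / complex_of_real e) \<longlongrightarrow> 0) (at_right 0)"
        by (rule tendsto_eventually)
      then show ?thesis using amul_out[OF False] by simp
    qed
    ultimately show "((\<lambda>e. (Phi (\<lambda>j. \<zeta> j + complex_of_real e * zmap m a b p j) k - Phi \<zeta> k) / complex_of_real e)
        \<longlongrightarrow> amul n m Ups u (zmap m a b p) Phi' k) (at_right 0)" by simp
  qed
  then show "\<exists>Phi'\<in>carrier_A n. \<forall>p. let h = zmap m a b p in
        ((\<lambda>\<epsilon>::real. (\<lambda>k. (Phi (\<lambda>j. \<zeta> j + complex_of_real \<epsilon> * h j) k - Phi \<zeta> k) / complex_of_real \<epsilon>))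
          \<longlongrightarrow> amul n m Ups u h Phi') (at_right 0)"
    using Pc by blast
qed

end


theorem theorem3:
  fixes n m :: nat
    and Ups :: "nat \<Rightarrow> nat \<Rightarrow> nat \<Rightarrow> complex" and u :: "nat \<Rightarrow> nat"
    and a b :: alg
    and Omega :: "(real \<times> real \<times> real) set"
    and Phi :: "alg \<Rightarrow> alg"
  assumes alg: "is_Anm n m Ups u"
    and a: "a \<in> carrier_A n" and b: "b \<in> carrier_A n"
    and lin_indep: "\<forall>x y z. zmap m a b (x, y, z) = (\<lambda>_. 0) \<longrightarrow> x = 0 \<and> y = 0 \<and> z = 0"
    and standing: "\<forall>v\<in>{1..m}. range (\<lambda>p. zmap m a b p v) = UNIV"
    and domain: "open Omega" "connected Omega" "Omega \<noteq> {}"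
    and cont: "continuous_on (zmap m a b ` Omega) Phi"
    and into: "Phi ` (zmap m a b ` Omega) \<subseteq> carrier_A n"
    and tri: "\<forall>A B C. \<not> collinear {A, B, C} \<and>
                 zmap m a b ` (convex hull {A, B, C}) \<subseteq> zmap m a b ` Omega
                 \<longrightarrow> bnd_integral n m Ups u a b Phi A B C = (\<lambda>_. 0)"
  shows "monogenic n m Ups u a b Phi (zmap m a b ` Omega)"
proof -
  interpret th3 n m Ups u a b Omega Phi
    using alg a b standing domain(1) cont into tri by (rule th3.intro)
  show ?thesis by (rule monogenic_main)
qed

end
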